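(* If $S\in{\mathcal S}_d({\mathcal U},{\mathcal Y})$ is inner, then every observable weakly coisometric realization of $S$ is commutative.
   Context: Let ${\mathbb B}^d=\{\lambda\in{\mathbb C}^d:\langle\lambda,\lambda\rangle<1\}$. ${\mathcal H}_{\mathcal Y}(k_d)$ is the reproducing kernel Hilbert space of ${\mathcal Y}$-valued functions on ${\mathbb B}^d$ with kernel $k_d(\lambda,\zeta)I_{\mathcal Y}$, $k_d(\lambda,\zeta)=1/(1-\langle\lambda,\zeta\rangle)$. ${\mathcal S}_d({\mathcal U},{\mathcal Y})$ is the set of ${\mathcal L}({\mathcal U},{\mathcal Y})$-valued holomorphic $S$ on ${\mathbb B}^d$ such that $M_S:f\mapsto Sf$ is a contraction from ${\mathcal H}_{\mathcal U}(k_d)$ into ${\mathcal H}_{\mathcal Y}(k_d)$; $S$ is inner if $M_S$ is a partial isometry. A realization: Hilbert space ${\mathcal X}$, $A_j\in{\mathcal L}({\mathcal X})$, $B_j\in{\mathcal L}({\mathcal U},{\mathcal X})$, $C\in{\mathcal L}({\mathcal X},{\mathcal Y})$, $D\in{\mathcal L}({\mathcal U},{\mathcal Y})$, $A=\mathrm{col}(A_j)$, $B=\mathrm{col}(B_j)$, $Z(\lambda)=[\lambda_1I\ \cdots\ \lambda_dI]$, with $S(\lambda)=D+C(I-Z(\lambda)A)^{-1}Z(\lambda)B$; ${\mathbf U}=\begin{bmatrix}A&B\\C&D\end{bmatrix}$. Observable: $C(I-Z(\lambda)A)^{-1}x\equiv0$ implies $x=0$. Weakly coisometric: ${\mathbf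 U}$ contractive and ${\mathbf U}^*$ isometric on ${\mathcal D}\oplus{\mathcal Y}$, ${\mathcal D}=\overline{\mathrm{span}}\{Z(\zeta)^*(I-A^*Z(\zeta)^* )^{-1}C^*y:\zeta\in{\mathbb B}^d,y\in{\mathcal Y}\}$. Commutative: $A_iA_j=A_jA_i$ for all $i,j$. *)

theory Defs
  imports "HOL-Analysis.Analysis"
begin

class chilbert = real_normed_vector + complete_space +
  fixes scaleC :: "complex \<Rightarrow> 'a \<Rightarrow> 'a"
    and cinner :: "'a \<Rightarrow> 'a \<Rightarrow> complex"
  assumes scaleC_add_right: "scaleC c (x + y) = scaleC c x + scaleC c y"
    and scaleC_add_left: "scaleC (c + d) x = scaleC c x + scaleC d x"
    and scaleC_scaleC: "scaleC c (scaleC d x) = scaleC (c * d) x"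
    and scaleC_one: "scaleC 1 x = x"
    and scaleR_scaleC: "scaleR r x = scaleC (complex_of_real r) x"
    and cinner_add_left: "cinner (x + y) z = cinner x z + cinner y z"
    and cinner_scaleC_left: "cinner (scaleC c x) y = c * cinner x y"
    and cinner_commute: "cinner y x = cnj (cinner x y)"
    and cinner_self_norm: "cinner x x = complex_of_real ((norm x)^2)"

instantiation complex :: chilbert
begin
definition scaleC_complex :: "complex \<Rightarrow> complex \<Rightarrow> complex" where
  "scaleC_complex c x = c * x"
definition cinner_complex :: "complex \<Rightarrow> complex \<Rightarrow> complex" where
  "cinner_complex x y = x * cnj y"
instance
proof
  fix c d x y z :: complex and r :: real
  show "scaleC c (x + y) = scaleC c x + scaleC c y" by (simp add: scaleC_complex_def algebra_simps)
  show "scaleC (c + d) x = scaleC c x + scaleC d x" by (simp add: scaleC_complex_def algebra_simps)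
  show "scaleC c (scaleC d x) = scaleC (c * d) x" by (simp add: scaleC_complex_def)
  show "scaleC 1 x = x" by (simp add: scaleC_complex_def)
  show "scaleR r x = scaleC (complex_of_real r) x" by (simp add: scaleC_complex_def scaleR_conv_of_real)
  show "cinner (x + y) z = cinner x z + cinner y z" by (simp add: cinner_complex_def algebra_simps)
  show "cinner (scaleC c x) y = c * cinner x y" by (simp add: cinner_complex_def scaleC_complex_def)
  show "cinner y x = cnj (cinner x y)" by (simp add: cinner_complex_def)
  show "cinner x x = complex_of_real ((norm x)^2)" unfolding cinner_complex_def by (rule complex_norm_square[symmetric])
qed
end

definition blin :: "('a::chilbert \<Rightarrow> 'b::chilbert) \<Rightarrow> bool" where
  "blin T \<longleftrightarrow> (\<forall>x y. T (x + y) = T x + T y) \<and> (\<forall>c x. T (scaleC c x) = scaleC c (T x))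
     \<and> (\<exists>K. \<forall>x. norm (T x) \<le> K * norm x)"

definition adj :: "('a::chilbert \<Rightarrow> 'b::chilbert) \<Rightarrow> 'b \<Rightarrow> 'a" where
  "adj T y = (THE x. \<forall>v. cinner (T v) y = cinner v x)"

definition ip :: "complex^'d \<Rightarrow> complex^'d \<Rightarrow> complex" where
  "ip l z = (\<Sum>j\<in>UNIV. l$j * cnj (z$j))"

definition dball :: "(complex^'d) set" where
  "dball = {l. Re (ip l l) < 1}"

definition kd :: "complex^'d \<Rightarrow> complex^'d \<Rightarrow> complex" where
  "kd l z = 1 / (1 - ip l z)"

text \<open>f belongs to H_Y(k_d) with norm^2 at most C iff the functional
  sum_j k_{l_j} y_j |-> sum_j <f(l_j), y_j> on the span of kernel functions is bounded by sqrt C.\<close>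
definition rk_bound :: "(complex^'d \<Rightarrow> 'y::chilbert) \<Rightarrow> real \<Rightarrow> bool" where
  "rk_bound f C \<longleftrightarrow> (\<forall>n (p::nat \<Rightarrow> complex^'d) (y::nat \<Rightarrow> 'y). (\<forall>i<n. p i \<in> dball) \<longrightarrow>
      (cmod (\<Sum>i<n. cinner (f (p i)) (y i)))^2
        \<le> C * Re (\<Sum>i<n. \<Sum>j<n. kd (p i) (p j) * cinner (y j) (y i)))"

definition rk_mem :: "(complex^'d \<Rightarrow> 'y::chilbert) \<Rightarrow> bool" where
  "rk_mem f \<longleftrightarrow> (\<exists>C. rk_bound f C)"

definition rk_normsq :: "(complex^'d \<Rightarrow> 'y::chilbert) \<Rightarrow> real" where
  "rk_normsq f = Inf {C. 0 \<le> C \<and> rk_bound f C}"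

text \<open>Inner product of H_Y(k_d) by polarization.\<close>
definition rk_inner :: "(complex^'d \<Rightarrow> 'y::chilbert) \<Rightarrow> (complex^'d \<Rightarrow> 'y) \<Rightarrow> complex" where
  "rk_inner f g = (1/4) * (\<Sum>k<(4::nat). \<i>^k *
      complex_of_real (rk_normsq (\<lambda>m. f m + scaleC (\<i>^k) (g m))))"

text \<open>Weak holomorphy on the ball (equivalent to holomorphy for operator-valued functions).\<close>
definition weakly_holo :: "(complex^'d \<Rightarrow> 'u::chilbert \<Rightarrow> 'y::chilbert) \<Rightarrow> bool" where
  "weakly_holo S \<longleftrightarrow> (\<forall>u y. \<forall>l\<in>dball. \<exists>g'.
      ((\<lambda>m. cinner (S m u) y) has_derivative g') (at l) \<and> (\<forall>v. g' (\<i> *s v) = \<i> * g' v))"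

definition schur_class :: "(complex^'d \<Rightarrow> 'u::chilbert \<Rightarrow> 'y::chilbert) \<Rightarrow> bool" where
  "schur_class S \<longleftrightarrow> (\<forall>l\<in>dball. blin (S l)) \<and> weakly_holo S \<and>
     (\<forall>f::complex^'d \<Rightarrow> 'u. rk_mem f \<longrightarrow>
        rk_mem (\<lambda>m. S m (f m)) \<and> rk_normsq (\<lambda>m. S m (f m)) \<le> rk_normsq f)"

text \<open>Inner: M_S is a partial isometry, i.e. isometric on the orthogonal complement of its kernel.\<close>
definition inner_schur :: "(complex^'d \<Rightarrow> 'u::chilbert \<Rightarrow> 'y::chilbert) \<Rightarrow> bool" where
  "inner_schur S \<longleftrightarrow> schur_class S \<and>
     (\<forall>f::complex^'d \<Rightarrow> 'u. rk_mem f \<and>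
        (\<forall>g. rk_mem g \<and> (\<forall>m\<in>dball. S m (g m) = 0) \<longrightarrow> rk_inner f g = 0)
        \<longrightarrow> rk_normsq (\<lambda>m. S m (f m)) = rk_normsq f)"

definition ZA :: "('d::finite \<Rightarrow> 'x::chilbert \<Rightarrow> 'x) \<Rightarrow> complex^'d \<Rightarrow> 'x \<Rightarrow> 'x" where
  "ZA A l x = (\<Sum>j\<in>UNIV. scaleC (l$j) (A j x))"

definition ZB :: "('d::finite \<Rightarrow> 'u::chilbert \<Rightarrow> 'x::chilbert) \<Rightarrow> complex^'d \<Rightarrow> 'u \<Rightarrow> 'x" where
  "ZB B l u = (\<Sum>j\<in>UNIV. scaleC (l$j) (B j u))"

definition resolv :: "('d::finite \<Rightarrow> 'x::chilbert \<Rightarrow> 'x) \<Rightarrow> complex^'d \<Rightarrow> 'x \<Rightarrow> 'x" where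
  "resolv A l x = (THE w. w - ZA A l w = x)"

definition realization :: "(complex^'d \<Rightarrow> 'u::chilbert \<Rightarrow> 'y::chilbert) \<Rightarrow>
    ('d::finite \<Rightarrow> 'x::chilbert \<Rightarrow> 'x) \<Rightarrow> ('d \<Rightarrow> 'u \<Rightarrow> 'x) \<Rightarrow> ('x \<Rightarrow> 'y) \<Rightarrow> ('u \<Rightarrow> 'y) \<Rightarrow> bool" where
  "realization S A B C D \<longleftrightarrow> (\<forall>j. blin (A j) \<and> blin (B j)) \<and> blin C \<and> blin D \<and>
     (\<forall>l\<in>dball. bij (\<lambda>w. w - ZA A l w)) \<and>
     (\<forall>l\<in>dball. \<forall>u. S l u = D u + C (resolv A l (ZB B l u)))"

definition observable :: "('d::finite \<Rightarrow> 'x::chilbert \<Rightarrow> 'x) \<Rightarrow> ('x \<Rightarrow> 'y::chilbert) \<Rightarrow> bool" where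
  "observable A C \<longleftrightarrow> (\<forall>x. (\<forall>l\<in>dball. C (resolv A l x) = 0) \<longrightarrow> x = 0)"

text \<open>The colligation U = [A B; C D] : X (+) U -> X^d (+) Y is contractive.\<close>
definition colig_contractive :: "('d::finite \<Rightarrow> 'x::chilbert \<Rightarrow> 'x) \<Rightarrow> ('d \<Rightarrow> 'u::chilbert \<Rightarrow> 'x)
    \<Rightarrow> ('x \<Rightarrow> 'y::chilbert) \<Rightarrow> ('u \<Rightarrow> 'y) \<Rightarrow> bool" where
  "colig_contractive A B C D \<longleftrightarrow> (\<forall>x u.
     (\<Sum>j\<in>UNIV. (norm (A j x + B j u))^2) + (norm (C x + D u))^2 \<le> (norm x)^2 + (norm u)^2)"

definition ZAstar :: "('d::finite \<Rightarrow> 'x::chilbert \<Rightarrow> 'x) \<Rightarrow> complex^'d \<Rightarrow> 'x \<Rightarrow> 'x" where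
  "ZAstar A z x = (\<Sum>j\<in>UNIV. adj (A j) (scaleC (cnj (z$j)) x))"

definition dgen :: "('d::finite \<Rightarrow> 'x::chilbert \<Rightarrow> 'x) \<Rightarrow> ('x \<Rightarrow> 'y::chilbert) \<Rightarrow> complex^'d \<Rightarrow> 'y \<Rightarrow> 'd \<Rightarrow> 'x" where
  "dgen A C z y = (let w = (THE w. w - ZAstar A z w = adj C y) in (\<lambda>j. scaleC (cnj (z$j)) w))"

definition dspan :: "('d::finite \<Rightarrow> 'x::chilbert \<Rightarrow> 'x) \<Rightarrow> ('x \<Rightarrow> 'y::chilbert) \<Rightarrow> ('d \<Rightarrow> 'x) set" where
  "dspan A C = {h. \<exists>n (c::nat \<Rightarrow> complex) z y. (\<forall>i<n. z i \<in> dball) \<and>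
      h = (\<lambda>j. \<Sum>i<n. scaleC (c i) (dgen A C (z i) (y i) j))}"

definition dspace :: "('d::finite \<Rightarrow> 'x::chilbert \<Rightarrow> 'x) \<Rightarrow> ('x \<Rightarrow> 'y::chilbert) \<Rightarrow> ('d \<Rightarrow> 'x) set" where
  "dspace A C = {h. \<forall>e>0. \<exists>h'\<in>dspan A C. (\<Sum>j\<in>UNIV. (norm (h j - h' j))^2) < e}"

definition weakly_coisometric :: "('d::finite \<Rightarrow> 'x::chilbert \<Rightarrow> 'x) \<Rightarrow> ('d \<Rightarrow> 'u::chilbert \<Rightarrow> 'x)
    \<Rightarrow> ('x \<Rightarrow> 'y::chilbert) \<Rightarrow> ('u \<Rightarrow> 'y) \<Rightarrow> bool" where
  "weakly_coisometric A B C D \<longleftrightarrow> colig_contractive A B C D \<and>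
     (\<forall>h y. h \<in> dspace A C \<longrightarrow>
        (norm ((\<Sum>j\<in>UNIV. adj (A j) (h j)) + adj C y))^2
          + (norm ((\<Sum>j\<in>UNIV. adj (B j) (h j)) + adj D y))^2
        = (\<Sum>j\<in>UNIV. (norm (h j))^2) + (norm y)^2)"

definition commutative :: "('d \<Rightarrow> 'x \<Rightarrow> 'x) \<Rightarrow> bool" where
  "commutative A \<longleftrightarrow> (\<forall>i j. A i \<circ> A j = A j \<circ> A i)"

end

theory Submission
  imports Defs
begin




lemma scaleC_real: "scaleC (complex_of_real r) x = scaleR r x"
  by (simp add: scaleR_scaleC)

lemma scaleC_zero_left[simp]: "scaleC 0 x = 0"
  using scaleC_real[of 0 x] by simp

lemma scaleC_zero_right[simp]: "scaleC c 0 = 0"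
proof -
  have "scaleC c 0 = scaleC c 0 + scaleC c 0" using scaleC_add_right[of c 0 0] by simp
  thus ?thesis by simp
qed

lemma scaleC_minus_left: "scaleC (- c) x = - scaleC c x"
proof -
  have "scaleC (- c) x + scaleC c x = 0" using scaleC_add_left[of "-c" c x] by simp
  thus ?thesis by (simp add: eq_neg_iff_add_eq_0)
qed

lemma scaleC_minus_right: "scaleC c (- x) = - scaleC c x"
proof -
  have "scaleC c (- x) + scaleC c x = 0" using scaleC_add_right[of c "-x" x] by simp
  thus ?thesis by (simp add: eq_neg_iff_add_eq_0)
qed

lemma scaleC_diff_right: "scaleC c (x - y) = scaleC c x - scaleC c y"
  using scaleC_add_right[of c x "-y"] by (simp add: scaleC_minus_right)

lemma scaleC_diff_left: "scaleC (c - d) x = scaleC c x - scaleC d x"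
  using scaleC_add_left[of c "-d" x] by (simp add: scaleC_minus_left)

lemma scaleC_minus1: "scaleC (-1) x = - x"
  by (simp add: scaleC_minus_left scaleC_one)

lemma scaleC_sum_right: "scaleC c (sum f A) = (\<Sum>i\<in>A. scaleC c (f i))"
  by (induction A rule: infinite_finite_induct) (auto simp: scaleC_add_right)

lemma scaleC_sum_left: "scaleC (sum f A) x = (\<Sum>i\<in>A. scaleC (f i) x)"
  by (induction A rule: infinite_finite_induct) (auto simp: scaleC_add_left)

lemma cinner_add_right: "cinner x (y + z) = cinner x y + cinner x z"
  by (metis cinner_add_left cinner_commute complex_cnj_add)

lemma cinner_scaleC_right: "cinner x (scaleC c y) = cnj c * cinner x y"
  by (metis cinner_commute cinner_scaleC_left complex_cnj_cnj complex_cnj_mult)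

lemma cinner_zero_left[simp]: "cinner 0 x = 0"
  using cinner_add_left[of 0 0 x] by simp

lemma cinner_zero_right[simp]: "cinner x 0 = 0"
  using cinner_add_right[of x 0 0] by simp

lemma cinner_minus_left: "cinner (- x) y = - cinner x y"
  using cinner_add_left[of x "-x" y] by (simp add: eq_neg_iff_add_eq_0 add.commute)

lemma cinner_minus_right: "cinner x (- y) = - cinner x y"
  using cinner_add_right[of x y "-y"] by (simp add: eq_neg_iff_add_eq_0 add.commute)

lemma cinner_diff_left: "cinner (x - y) z = cinner x z - cinner y z"
  using cinner_add_left[of x "-y" z] by (simp add: cinner_minus_left)

lemma cinner_diff_right: "cinner x (y - z) = cinner x y - cinner x z"
  using cinner_add_right[of x y "-z"] by (simp add: cinner_minus_right)

lemma cinner_sum_left: "cinner (sum f A) y = (\<Sum>i\<in>A. cinner (f i) y)"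
  by (induction A rule: infinite_finite_induct) (auto simp: cinner_add_left)

lemma cinner_sum_right: "cinner y (sum f A) = (\<Sum>i\<in>A. cinner y (f i))"
  by (induction A rule: infinite_finite_induct) (auto simp: cinner_add_right)

lemma cinner_self_re: "Re (cinner x x) = (norm x)^2"
  by (simp add: cinner_self_norm)

lemma cinner_self_im: "Im (cinner x x) = 0"
  by (simp add: cinner_self_norm)

lemma norm_add_sq: "(norm (x + y))^2 = (norm x)^2 + (norm y)^2 + 2 * Re (cinner x y)"
proof -
  have "complex_of_real ((norm (x+y))^2) = cinner (x+y) (x+y)" by (simp add: cinner_self_norm)
  also have "\<dots> = cinner x x + cinner y y + (cinner x y + cinner y x)"
    by (simp add: cinner_add_left cinner_add_right algebra_simps)
  finally have "(norm (x+y))^2 = Re (cinner x x + cinner y y + (cinner x y + cinner y x))"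
    by (metis Re_complex_of_real)
  thus ?thesis using cinner_commute[of x y] by (simp add: cinner_self_re)
qed

lemma norm_diff_sq: "(norm (x - y))^2 = (norm x)^2 + (norm y)^2 - 2 * Re (cinner x y)"
  using norm_add_sq[of x "-y"] by (simp add: cinner_minus_right)

lemma norm_scaleC: "norm (scaleC c x) = cmod c * norm x"
proof -
  have "cinner (scaleC c x) (scaleC c x) = c * cnj c * cinner x x"
    by (simp add: cinner_scaleC_left cinner_scaleC_right)
  hence "Re (cinner (scaleC c x) (scaleC c x)) = (cmod c)^2 * Re (cinner x x)"
    by (simp add: complex_norm_square[symmetric] cinner_self_norm del: of_real_power)
  hence "(norm (scaleC c x))^2 = (cmod c * norm x)^2" by (simp add: cinner_self_re power_mult_distrib)
  thus ?thesis by (simp add: power2_eq_iff_nonneg)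
qed

lemma cinner_eq_zero_iff: "cinner x x = 0 \<longleftrightarrow> x = 0"
  by (simp add: cinner_self_norm)

lemma cauchy_schwarz: "cmod (cinner x y) \<le> norm x * norm y"
proof (cases "y = 0")
  case True then show ?thesis by simp
next
  case False
  define t where "t = cinner x y / complex_of_real ((norm y)^2)"
  have ny: "norm y > 0" using False by simp
  have "0 \<le> (norm (x - scaleC t y))^2" by simp
  also have "\<dots> = (norm x)^2 + (cmod t * norm y)^2 - 2 * Re (cnj t * cinner x y)"
    by (simp add: norm_diff_sq norm_scaleC cinner_scaleC_right)
  also have "cnj t * cinner x y = complex_of_real ((cmod (cinner x y))^2 / (norm y)^2)"
    using complex_norm_square[of "cinner x y"] by (simp add: t_def mult.commute del: of_real_power)
  also have "(cmod t * norm y)^2 = (cmod (cinner x y))^2 / (norm y)^2"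
  proof -
    have "cmod t = cmod (cinner x y) / (norm y)^2" unfolding t_def norm_divide
      by (metis norm_of_real abs_of_nonneg zero_le_power2 of_real_power norm_power)
    thus ?thesis using ny by (simp add: power_divide power2_eq_square)
  qed
  finally have "(cmod (cinner x y))^2 / (norm y)^2 \<le> (norm x)^2" by simp
  hence "(cmod (cinner x y))^2 \<le> (norm x * norm y)^2" using ny
    by (simp add: field_simps power_mult_distrib)
  thus ?thesis by (meson abs_le_square_iff abs_norm_cancel mult_nonneg_nonneg norm_ge_zero power2_le_imp_le)
qed

lemma polarization:
  "cinner x y = (1/4) * (\<Sum>k<(4::nat). \<i>^k * complex_of_real ((norm (x + scaleC (\<i>^k) y))^2))"
proof -
  have e: "complex_of_real ((norm (x + scaleC c y))^2) = cinner x x + cnj c * cinner x y + c * cinner y x + c * cnj c * cinner y y" for c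
  proof -
    have "complex_of_real ((norm (x + scaleC c y))^2) = cinner (x + scaleC c y) (x + scaleC c y)"
      by (simp only: cinner_self_norm)
    thus ?thesis by (simp add: cinner_add_left cinner_add_right cinner_scaleC_left cinner_scaleC_right algebra_simps)
  qed
  have s4: "(\<Sum>k<(4::nat). f k) = f 0 + f 1 + f 2 + f 3" for f :: "nat \<Rightarrow> complex"
    by (simp add: numeral_eq_Suc)
  show ?thesis unfolding s4 e by (simp add: power2_eq_square power3_eq_cube algebra_simps complex_eq_iff)
qed




lemma scaleC_scaleR_phi:
  fixes \<phi> :: "'a::chilbert \<Rightarrow> complex"
  assumes h: "\<And>c x. \<phi> (scaleC c x) = c * \<phi> x"
  shows "\<phi> (scaleR r x) = complex_of_real r * \<phi> x"
  using h[of "complex_of_real r" x] by (simp add: scaleC_real)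

lemma orth_of_min:
  fixes z0 m' :: "'a::chilbert"
  assumes "\<And>t. (norm z0)^2 \<le> (norm (z0 - scaleC t m'))^2"
  shows "cinner z0 m' = 0"
proof (cases "m' = 0")
  case True thus ?thesis by simp
next
  case False
  define t where "t = cinner z0 m' / complex_of_real ((norm m')^2)"
  have ny: "norm m' > 0" using False by simp
  have "(norm z0)^2 \<le> (norm (z0 - scaleC t m'))^2" by (rule assms)
  also have "\<dots> = (norm z0)^2 + (cmod t * norm m')^2 - 2 * Re (cnj t * cinner z0 m')"
    by (simp add: norm_diff_sq norm_scaleC cinner_scaleC_right)
  also have "cnj t * cinner z0 m' = complex_of_real ((cmod (cinner z0 m'))^2 / (norm m')^2)"
    using complex_norm_square[of "cinner z0 m'"] by (simp add: t_def mult.commute del: of_real_power)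
  also have "(cmod t * norm m')^2 = (cmod (cinner z0 m'))^2 / (norm m')^2"
  proof -
    have "cmod t = cmod (cinner z0 m') / (norm m')^2" unfolding t_def norm_divide
      by (metis norm_of_real abs_of_nonneg zero_le_power2 of_real_power norm_power)
    thus ?thesis using ny by (simp add: power_divide power2_eq_square)
  qed
  finally have "(cmod (cinner z0 m'))^2 / (norm m')^2 \<le> 0" by simp
  hence "(cmod (cinner z0 m'))^2 \<le> 0" using ny by (simp add: divide_le_0_iff)
  thus ?thesis by simp
qed

lemma riesz:
  fixes \<phi> :: "'a::chilbert \<Rightarrow> complex"
  assumes add: "\<And>x y. \<phi> (x + y) = \<phi> x + \<phi> y"
    and hom: "\<And>c x. \<phi> (scaleC c x) = c * \<phi> x"
    and bnd: "\<And>x. cmod (\<phi> x) \<le> K * norm x"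
  shows "\<exists>z. \<forall>v. \<phi> v = cinner v z"
proof (cases "\<forall>v. \<phi> v = 0")
  case True thus ?thesis by (intro exI[of _ 0]) simp
next
  case False
  then obtain v0 where v0: "\<phi> v0 \<noteq> 0" by blast
  have phi0: "\<phi> 0 = 0" using add[of 0 0] by simp
  have phim: "\<phi> (- x) = - \<phi> x" for x using add[of x "-x"] phi0 by (simp add: eq_neg_iff_add_eq_0 add.commute)
  have phid: "\<phi> (x - y) = \<phi> x - \<phi> y" for x y using add[of x "-y"] phim[of y] by simp
  have phiR: "\<phi> (scaleR r x) = complex_of_real r * \<phi> x" for r x
    by (rule scaleC_scaleR_phi[OF hom])
  define M where "M = {v. \<phi> v = 0}"
  define NS where "NS = (\<lambda>m. norm (v0 - m)) ` M"
  define d where "d = Inf NS"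
  have NSne: "NS \<noteq> {}" unfolding NS_def M_def using phi0 by auto
  have NSb: "bdd_below NS" unfolding NS_def by (intro bdd_belowI[of _ 0]) auto
  have d_le: "d \<le> norm (v0 - m)" if "m \<in> M" for m
    unfolding d_def NS_def by (rule cInf_lower) (use that NSb NS_def in auto)
  have d0: "0 \<le> d" unfolding d_def by (rule cInf_greatest[OF NSne]) (auto simp: NS_def)
  have "\<exists>m\<in>M. norm (v0 - m) < d + 1 / real (Suc n)" for n
  proof -
    have "Inf NS < d + 1 / real (Suc n)" unfolding d_def by simp
    then obtain a where "a \<in> NS" "a < d + 1 / real (Suc n)" using cInf_lessD[OF NSne] by blast
    thus ?thesis unfolding NS_def by auto
  qed
  then obtain ms where msM: "\<And>n. ms n \<in> M" and msd: "\<And>n. norm (v0 - ms n) < d + 1 / real (Suc n)"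
    by metis
  have par: "(norm (ms n - ms k))^2 \<le> 2 * (2*d+1) * (1 / real (Suc n) + 1 / real (Suc k))" for n k
  proof -
    define a where "a = v0 - ms n"
    define b where "b = v0 - ms k"
    define mid where "mid = scaleR (1/2) (ms n + ms k)"
    have midM: "mid \<in> M" using msM[of n] msM[of k] unfolding M_def mid_def by (simp add: phiR add)
    have ab: "a + b = scaleR 2 (v0 - mid)" unfolding a_def b_def mid_def by (simp add: algebra_simps scaleR_2)
    have amb: "a - b = ms k - ms n" unfolding a_def b_def by simp
    have pl: "(norm (a+b))^2 + (norm (a-b))^2 = 2*(norm a)^2 + 2*(norm b)^2"
      using norm_add_sq[of a b] norm_diff_sq[of a b] by simp
    have "(norm (a+b))^2 = 4 * (norm (v0 - mid))^2" unfolding ab by (simp add: power2_eq_square)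
    moreover have "d^2 \<le> (norm (v0 - mid))^2" using d_le[OF midM] d0 by (simp add: power_mono)
    ultimately have "(norm (a - b))^2 \<le> 2*(norm a)^2 + 2*(norm b)^2 - 4*d^2" using pl by linarith
    moreover have "(norm a)^2 - d^2 \<le> (2*d+1) * (1 / real (Suc n))"
    proof -
      have l: "d \<le> norm a" "norm a < d + 1/real (Suc n)" using d_le[OF msM[of n]] msd[of n] a_def by auto
      have "1/real (Suc n) \<le> 1" by simp
      have "(norm a)^2 - d^2 = (norm a - d) * (norm a + d)" by (simp add: power2_eq_square algebra_simps)
      also have "\<dots> \<le> (1/real (Suc n)) * (2*d+1)"
        using l \<open>1/real (Suc n) \<le> 1\<close> d0 by (intro mult_mono) linarith+
      finally show ?thesis by simp
    qed
    moreover have "(norm b)^2 - d^2 \<le> (2*d+1) * (1 / real (Suc k))"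
    proof -
      have l: "d \<le> norm b" "norm b < d + 1/real (Suc k)" using d_le[OF msM[of k]] msd[of k] b_def by auto
      have "1/real (Suc k) \<le> 1" by simp
      have "(norm b)^2 - d^2 = (norm b - d) * (norm b + d)" by (simp add: power2_eq_square algebra_simps)
      also have "\<dots> \<le> (1/real (Suc k)) * (2*d+1)"
        using l \<open>1/real (Suc k) \<le> 1\<close> d0 by (intro mult_mono) linarith+
      finally show ?thesis by simp
    qed
    moreover have "2 * (2*d+1) * (1 / real (Suc n) + 1 / real (Suc k)) = 2 * ((2*d+1) * (1 / real (Suc n))) + 2 * ((2*d+1) * (1 / real (Suc k)))"
      by (simp only: ring_distribs mult.assoc)
    ultimately have "(norm (a - b))^2 \<le> 2 * (2*d+1) * (1 / real (Suc n) + 1 / real (Suc k))"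
      by linarith
    thus ?thesis using amb by (simp add: norm_minus_commute)
  qed
  have cau: "Cauchy ms"
  proof (rule metric_CauchyI)
    fix e :: real assume e: "e > 0"
    define c where "c = 2 * (2*d+1)"
    have c0: "c > 0" using d0 by (simp add: c_def)
    obtain N where N0: "2 * c / e^2 < real N" using reals_Archimedean2 by blast
    have N: "real (Suc N) > 2 * c / e^2" using N0 by simp
    have "dist (ms m) (ms n) < e" if "m \<ge> N" "n \<ge> N" for m n
    proof -
      have i1: "1 / real (Suc m) \<le> 1 / real (Suc N)" "1 / real (Suc n) \<le> 1 / real (Suc N)"
        using that by (auto simp: frac_le)
      have "2 * c / e^2 > 0" using c0 e by simp
      have "1 / real (Suc N) < e^2 / (2*c)"
      proof -
        have p: "2 * c / e^2 > 0" using c0 e by simp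
        have "1 / real (Suc N) < 1 / (2 * c / e^2)" using frac_less2[of 1 1 "2*c/e^2" "real (Suc N)"] p N by linarith
        thus ?thesis by simp
      qed
      have "(dist (ms m) (ms n))^2 \<le> c * (1 / real (Suc m) + 1 / real (Suc n))"
        unfolding dist_norm c_def by (rule par)
      also have "\<dots> \<le> c * (2 / real (Suc N))" using i1 c0 by (intro mult_left_mono) auto
      also have "\<dots> < c * (2 * (e^2 / (2*c)))" 
      proof (rule mult_strict_left_mono[OF _ c0])
        have "2 / real (Suc N) = 2 * (1 / real (Suc N))" by simp
        thus "2 / real (Suc N) < 2 * (e^2 / (2*c))" using \<open>1 / real (Suc N) < e^2 / (2*c)\<close> by linarith
      qed
      also have "\<dots> = e^2" using c0 by simp
      finally have "(dist (ms m) (ms n))^2 < e^2" .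
      thus ?thesis by (rule power_less_imp_less_base) (use e in simp)
    qed
    thus "\<exists>N. \<forall>m\<ge>N. \<forall>n\<ge>N. dist (ms m) (ms n) < e" by blast
  qed
  then obtain m where lim: "ms \<longlonglongrightarrow> m" using Cauchy_convergent_iff convergent_def by blast
  have "(\<lambda>n. \<phi> (ms n) - \<phi> m) \<longlonglongrightarrow> 0"
  proof (rule tendsto_norm_zero_cancel, rule tendsto_sandwich[of "\<lambda>_. 0" _ _ "\<lambda>n. K * norm (ms n - m)"])
    show "\<forall>\<^sub>F n in sequentially. 0 \<le> norm (\<phi> (ms n) - \<phi> m)" by simp
    show "\<forall>\<^sub>F n in sequentially. norm (\<phi> (ms n) - \<phi> m) \<le> K * norm (ms n - m)"
      using bnd by (simp add: phid[symmetric])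
    show "(\<lambda>_. 0) \<longlonglongrightarrow> (0::real)" by simp
    have "(\<lambda>n. norm (ms n - m)) \<longlonglongrightarrow> 0" using lim by (simp add: LIM_zero tendsto_norm_zero)
    thus "(\<lambda>n. K * norm (ms n - m)) \<longlonglongrightarrow> 0" using tendsto_mult_right_zero by blast
  qed
  moreover have "\<phi> (ms n) = 0" for n using msM[of n] by (simp add: M_def)
  ultimately have "(\<lambda>n. - \<phi> m) \<longlonglongrightarrow> 0" by simp
  hence "- \<phi> m = 0" by (simp only: LIMSEQ_const_iff)
  hence mM: "m \<in> M" unfolding M_def by simp
  have "(\<lambda>n. norm (v0 - ms n)) \<longlonglongrightarrow> norm (v0 - m)" by (intro tendsto_intros lim)
  moreover have "(\<lambda>n. d + 1 / real (Suc n)) \<longlonglongrightarrow> d + 0"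
    by (intro tendsto_intros LIMSEQ_Suc[OF lim_inverse_n'[unfolded inverse_eq_divide]] )
  ultimately have "norm (v0 - m) \<le> d + 0"
  proof (rule LIMSEQ_le)
    show "\<exists>N. \<forall>n\<ge>N. norm (v0 - ms n) \<le> d + 1 / real (Suc n)" using msd less_imp_le by blast
  qed
  hence dm: "norm (v0 - m) = d" using d_le[OF mM] by simp
  define z0 where "z0 = v0 - m"
  have orth: "cinner z0 m' = 0" if "m' \<in> M" for m'
  proof (rule orth_of_min)
    fix t
    have "m + scaleC t m' \<in> M" using mM that unfolding M_def by (simp add: add hom)
    hence "d \<le> norm (v0 - (m + scaleC t m'))" by (rule d_le)
    moreover have "v0 - (m + scaleC t m') = z0 - scaleC t m'" unfolding z0_def by (simp add: algebra_simps)
    ultimately have "d \<le> norm (z0 - scaleC t m')" by simp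
    thus "(norm z0)^2 \<le> (norm (z0 - scaleC t m'))^2" using dm d0 z0_def by (simp add: power_mono)
  qed
  have pz: "\<phi> z0 = \<phi> v0" using mM unfolding z0_def M_def by (simp add: phid)
  have z0nz: "z0 \<noteq> 0" using pz v0 phi0 by auto
  define z where "z = scaleC (cnj (\<phi> z0) / complex_of_real ((norm z0)^2)) z0"
  have "\<phi> v = cinner v z" for v
  proof -
    define w where "w = v - scaleC (\<phi> v / \<phi> z0) z0"
    have "w \<in> M" unfolding w_def M_def using pz v0 by (simp add: phid hom)
    hence "cinner w z0 = 0" using orth cinner_commute by (metis complex_cnj_zero)
    hence "cinner v z0 = (\<phi> v / \<phi> z0) * cinner z0 z0"
      unfolding w_def by (simp add: cinner_diff_left cinner_scaleC_left)
    moreover have "cinner z0 z0 = complex_of_real ((norm z0)^2)" by (rule cinner_self_norm)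
    ultimately show ?thesis using z0nz pz v0
      by (simp add: z_def cinner_scaleC_right del: of_real_power)
  qed
  thus ?thesis by blast
qed

lemma blin_linear:
  assumes "blin T"
  shows "T (x + y) = T x + T y" "T (scaleC c x) = scaleC c (T x)"
  using assms unfolding blin_def by auto

lemma blin_bounded:
  assumes "blin T" obtains K where "\<And>x. norm (T x) \<le> K * norm x"
  using assms unfolding blin_def by auto

lemma blin_zero: "blin T \<Longrightarrow> T 0 = 0"
  using blin_linear(1)[of T 0 0] by simp

lemma blin_minus: "blin T \<Longrightarrow> T (- x) = - T x"
  using blin_linear(1)[of T x "-x"] blin_zero[of T] by (simp add: eq_neg_iff_add_eq_0 add.commute)

lemma blin_diff: "blin T \<Longrightarrow> T (x - y) = T x - T y"
  using blin_linear(1)[of T x "-y"] blin_minus[of T y] by simp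

lemma blin_sum: "blin T \<Longrightarrow> T (sum f A) = (\<Sum>i\<in>A. T (f i))"
  by (induction A rule: infinite_finite_induct) (auto simp: blin_zero blin_linear)

lemma adj_exists:
  fixes T :: "'a::chilbert \<Rightarrow> 'b::chilbert"
  assumes "blin T"
  shows "\<exists>z. \<forall>v. cinner (T v) y = cinner v z"
proof -
  obtain K where K: "\<And>x. norm (T x) \<le> K * norm x" using blin_bounded[OF assms] by blast
  show ?thesis
  proof (rule riesz[of "\<lambda>v. cinner (T v) y" "K * norm y"])
    show "cinner (T (x + x')) y = cinner (T x) y + cinner (T x') y" for x x'
      using assms by (simp add: blin_linear cinner_add_left)
    show "cinner (T (scaleC c x)) y = c * cinner (T x) y" for c x
      using assms by (simp add: blin_linear cinner_scaleC_left)
    show "cmod (cinner (T x) y) \<le> K * norm y * norm x" for x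
    proof -
      have "cmod (cinner (T x) y) \<le> norm (T x) * norm y" by (rule cauchy_schwarz)
      also have "\<dots> \<le> K * norm x * norm y" using K[of x] by (simp add: mult_right_mono)
      finally show ?thesis by (simp add: algebra_simps)
    qed
  qed
qed

lemma adj_unique:
  fixes z z' :: "'a::chilbert"
  assumes "\<forall>v. cinner v z = cinner v z'" shows "z = z'"
proof -
  have "cinner (z - z') (z - z') = 0" using assms by (simp add: cinner_diff_right)
  thus ?thesis by (simp add: cinner_eq_zero_iff)
qed

lemma adj_prop:
  fixes T :: "'a::chilbert \<Rightarrow> 'b::chilbert"
  assumes "blin T"
  shows "cinner (T v) y = cinner v (adj T y)"
proof -
  obtain z where z: "\<forall>v. cinner (T v) y = cinner v z" using adj_exists[OF assms] by blast
  have "(THE x. \<forall>v. cinner (T v) y = cinner v x) = z"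
    by (rule the_equality) (use z adj_unique in auto)
  thus ?thesis using z unfolding adj_def by simp
qed

lemma adj_eqI:
  fixes T :: "'a::chilbert \<Rightarrow> 'b::chilbert"
  assumes "blin T" "\<And>v. cinner (T v) y = cinner v z"
  shows "adj T y = z"
  by (rule adj_unique) (use adj_prop[OF assms(1)] assms(2) in auto)

lemma adj_add:
  assumes "blin T" shows "adj T (y + y') = adj T y + adj T y'"
  by (rule adj_eqI[OF assms]) (simp add: cinner_add_right adj_prop[OF assms])

lemma adj_scaleC:
  assumes "blin T" shows "adj T (scaleC c y) = scaleC c (adj T y)"
  by (rule adj_eqI[OF assms]) (simp add: cinner_scaleC_right adj_prop[OF assms])

lemma adj_zero: assumes "blin T" shows "adj T 0 = 0"
  using adj_add[OF assms, of 0 0] by simp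

lemma adj_minus: assumes "blin T" shows "adj T (- y) = - adj T y"
  using adj_scaleC[OF assms, of "-1" y] by (simp add: scaleC_minus1)

lemma adj_diff: assumes "blin T" shows "adj T (y - y') = adj T y - adj T y'"
  using adj_add[OF assms, of y "-y'"] adj_minus[OF assms, of y'] by simp

lemma adj_sum: assumes "blin T" shows "adj T (sum f A) = (\<Sum>i\<in>A. adj T (f i))"
  by (induction A rule: infinite_finite_induct) (auto simp: adj_zero[OF assms] adj_add[OF assms])




lemma ip_self_real: "ip z z = complex_of_real (\<Sum>j\<in>UNIV. (cmod (z$j))^2)"
  unfolding ip_def of_real_sum by (rule sum.cong) (simp_all only: complex_norm_square)

lemma ip_self_re: "Re (ip z z) = (\<Sum>j\<in>UNIV. (cmod (z$j))^2)"
  by (simp add: ip_self_real)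

lemma ip_cnj: "cnj (ip a b) = ip b a"
  unfolding ip_def by (simp add: mult.commute)

lemma ip_cs: "(cmod (ip a b))^2 \<le> Re (ip a a) * Re (ip b b)"
proof -
  have "cmod (ip a b) \<le> (\<Sum>j\<in>UNIV. cmod (a$j) * cmod (b$j))"
    unfolding ip_def by (rule order.trans[OF norm_sum]) (simp add: norm_mult)
  hence "(cmod (ip a b))^2 \<le> (\<Sum>j\<in>UNIV. cmod (a$j) * cmod (b$j))^2"
    by (simp add: power_mono)
  also have "\<dots> \<le> (\<Sum>j\<in>UNIV. (cmod (a$j))^2) * (\<Sum>j\<in>UNIV. (cmod (b$j))^2)"
    by (rule Cauchy_Schwarz_ineq_sum)
  finally show ?thesis by (simp add: ip_self_re)
qed

lemma dball_ip_lt1: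
  assumes "a \<in> dball" "b \<in> dball" shows "cmod (ip a b) < 1"
proof -
  have a: "0 \<le> Re (ip a a)" "Re (ip a a) < 1" and b: "0 \<le> Re (ip b b)" "Re (ip b b) < 1"
    using assms by (auto simp: dball_def ip_self_re intro: sum_nonneg)
  have "Re (ip a a) * Re (ip b b) < 1"
  proof -
    have "Re (ip a a) * Re (ip b b) \<le> Re (ip a a)" using a b by (intro mult_left_le) auto
    thus ?thesis using a by linarith
  qed
  hence "(cmod (ip a b))^2 < 1" using ip_cs[of a b] by linarith
  thus ?thesis by (simp add: power_less_one_iff abs_square_less_1)
qed

lemma kd_ip: assumes "a \<in> dball" "b \<in> dball"
  shows "kd a b * (1 - ip a b) = 1" "kd a b = 1 + kd a b * ip a b"
proof -
  have "ip a b \<noteq> 1" using dball_ip_lt1[OF assms] by auto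
  thus "kd a b * (1 - ip a b) = 1" "kd a b = 1 + kd a b * ip a b"
    unfolding kd_def by (auto simp: field_simps)
qed

lemma zero_dball: "0 \<in> dball"
  by (simp add: dball_def ip_def)

lemma scaleC_comm: "scaleC a (scaleC b x) = scaleC b (scaleC a x)"
  by (simp add: scaleC_scaleC mult.commute)

lemma norm_sq_sum_adj_bound:
  fixes A :: "'d::finite \<Rightarrow> 'x::chilbert \<Rightarrow> 'x"
  assumes bl: "\<And>j. blin (A j)" and contr: "\<And>x. (\<Sum>j\<in>UNIV. (norm (A j x))^2) \<le> (norm x)^2"
  shows "(norm (\<Sum>j\<in>UNIV. adj (A j) (h j)))^2 \<le> (\<Sum>j\<in>UNIV. (norm (h j))^2)"
proof -
  define z where "z = (\<Sum>j\<in>UNIV. adj (A j) (h j))"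
  have "complex_of_real ((norm z)^2) = cinner z z" by (simp only: cinner_self_norm)
  also have "\<dots> = cinner z (\<Sum>j\<in>UNIV. adj (A j) (h j))" by (subst (2) z_def) (rule refl)
  also have "\<dots> = (\<Sum>j\<in>UNIV. cinner z (adj (A j) (h j)))" by (rule cinner_sum_right)
  also have "\<dots> = (\<Sum>j\<in>UNIV. cinner (A j z) (h j))" by (simp add: adj_prop[OF bl])
  finally have E: "complex_of_real ((norm z)^2) = (\<Sum>j\<in>UNIV. cinner (A j z) (h j))" .
  have "(norm z)^2 = Re (\<Sum>j\<in>UNIV. cinner (A j z) (h j))"
    using arg_cong[of _ _ Re, OF E] by (simp only: Re_complex_of_real)
  also have "\<dots> \<le> (\<Sum>j\<in>UNIV. norm (A j z) * norm (h j))"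
    by (simp add: sum_mono complex_Re_le_cmod cauchy_schwarz order.trans[OF complex_Re_le_cmod])
  also have "\<dots> \<le> sqrt (\<Sum>j\<in>UNIV. (norm (A j z))^2) * sqrt (\<Sum>j\<in>UNIV. (norm (h j))^2)"
  proof -
    have "(\<Sum>j\<in>UNIV. norm (A j z) * norm (h j))^2 \<le> (\<Sum>j\<in>UNIV. (norm (A j z))^2) * (\<Sum>j\<in>UNIV. (norm (h j))^2)"
      by (rule Cauchy_Schwarz_ineq_sum)
    hence "(\<Sum>j\<in>UNIV. norm (A j z) * norm (h j)) \<le> sqrt ((\<Sum>j\<in>UNIV. (norm (A j z))^2) * (\<Sum>j\<in>UNIV. (norm (h j))^2))"
      by (rule real_le_rsqrt)
    thus ?thesis by (simp add: real_sqrt_mult)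
  qed
  also have "\<dots> \<le> norm z * sqrt (\<Sum>j\<in>UNIV. (norm (h j))^2)"
    using contr[of z] by (intro mult_right_mono) (auto intro: real_le_lsqrt sum_nonneg)
  finally have "(norm z)^2 \<le> norm z * sqrt (\<Sum>j\<in>UNIV. (norm (h j))^2)" .
  hence "norm z \<le> sqrt (\<Sum>j\<in>UNIV. (norm (h j))^2)"
    by (cases "norm z = 0") (auto simp: power2_eq_square intro: sum_nonneg)
  hence "(norm z)^2 \<le> (sqrt (\<Sum>j\<in>UNIV. (norm (h j))^2))^2" by (simp add: power_mono)
  thus ?thesis unfolding z_def by (simp add: sum_nonneg)
qed

locale rsetup =
  fixes S :: "complex^'d \<Rightarrow> 'u::chilbert \<Rightarrow> 'y::chilbert"
    and A :: "'d::finite \<Rightarrow> 'x::chilbert \<Rightarrow> 'x"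
    and B :: "'d \<Rightarrow> 'u \<Rightarrow> 'x"
    and C :: "'x \<Rightarrow> 'y"
    and D :: "'u \<Rightarrow> 'y"
  assumes real: "realization S A B C D"
    and contr: "colig_contractive A B C D"
    and Sblin: "\<And>l. l \<in> dball \<Longrightarrow> blin (S l)"
begin

lemma blinA: "blin (A j)" and blinB: "blin (B j)" and blinC: "blin C" and blinD: "blin D"
  using real unfolding realization_def by auto

lemma bijZ: "l \<in> dball \<Longrightarrow> bij (\<lambda>w. w - ZA A l w)"
  using real unfolding realization_def by auto

lemma S_formula: "l \<in> dball \<Longrightarrow> S l u = D u + C (resolv A l (ZB B l u))"
  using real unfolding realization_def by auto

lemma resolv_ex1: assumes "l \<in> dball" shows "\<exists>!w. w - ZA A l w = x"
  using bijZ[OF assms] unfolding bij_iff by blast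

lemma resolv_eq: assumes "l \<in> dball" shows "resolv A l x - ZA A l (resolv A l x) = x"
  unfolding resolv_def by (rule theI'[OF resolv_ex1[OF assms]])

lemma resolv_unique: assumes "l \<in> dball" "w - ZA A l w = x" shows "resolv A l x = w"
  using resolv_ex1[OF assms(1), of x] resolv_eq[OF assms(1), of x] assms(2) by blast

lemma ZA_add: "ZA A l (x + y) = ZA A l x + ZA A l y"
  unfolding ZA_def by (simp add: blin_linear[OF blinA] scaleC_add_right sum.distrib)

lemma ZA_scaleC: "ZA A l (scaleC c x) = scaleC c (ZA A l x)"
  unfolding ZA_def by (simp add: blin_linear[OF blinA] scaleC_sum_right scaleC_comm)

lemma ZA_zero: "ZA A l 0 = 0" using ZA_add[of l 0 0] by simp

lemma ZA_diff: "ZA A l (x - y) = ZA A l x - ZA A l y"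
  unfolding ZA_def by (simp add: blin_diff[OF blinA] scaleC_diff_right sum_subtractf)

lemma ZA_sum: "ZA A l (sum f I) = (\<Sum>i\<in>I. ZA A l (f i))"
  by (induction I rule: infinite_finite_induct) (auto simp: ZA_zero ZA_add)

lemma resolv_add: "l \<in> dball \<Longrightarrow> resolv A l (x + y) = resolv A l x + resolv A l y"
proof (rule resolv_unique)
  assume l: "l \<in> dball"
  show "resolv A l x + resolv A l y - ZA A l (resolv A l x + resolv A l y) = x + y"
  proof -
    have "resolv A l x + resolv A l y - ZA A l (resolv A l x + resolv A l y) = (resolv A l x - ZA A l (resolv A l x)) + (resolv A l y - ZA A l (resolv A l y))"
      by (simp add: ZA_add algebra_simps)
    thus ?thesis by (simp only: resolv_eq[OF l])
  qed
qed

lemma resolv_scaleC: "l \<in> dball \<Longrightarrow> resolv A l (scaleC c x) = scaleC c (resolv A l x)"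
  by (rule resolv_unique) (auto simp: ZA_scaleC resolv_eq scaleC_diff_right[symmetric])

lemma resolv_diff: "l \<in> dball \<Longrightarrow> resolv A l (x - y) = resolv A l x - resolv A l y"
proof (rule resolv_unique)
  assume l: "l \<in> dball"
  show "resolv A l x - resolv A l y - ZA A l (resolv A l x - resolv A l y) = x - y"
  proof -
    have "resolv A l x - resolv A l y - ZA A l (resolv A l x - resolv A l y) = (resolv A l x - ZA A l (resolv A l x)) - (resolv A l y - ZA A l (resolv A l y))"
      by (simp add: ZA_diff algebra_simps)
    thus ?thesis by (simp only: resolv_eq[OF l])
  qed
qed

lemma resolv_zero_pt: "resolv A 0 x = x"
  by (rule resolv_unique[OF zero_dball]) (simp add: ZA_def)

lemma resolv_gleason:
  assumes l: "l \<in> dball"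
  shows "resolv A l x = x + (\<Sum>j\<in>UNIV. scaleC (l$j) (resolv A l (A j x)))"
proof (rule resolv_unique[OF l])
  define v where "v = (\<Sum>j\<in>UNIV. scaleC (l$j) (resolv A l (A j x)))"
  have "ZA A l v = (\<Sum>j\<in>UNIV. scaleC (l$j) (ZA A l (resolv A l (A j x))))"
    unfolding v_def by (simp add: ZA_sum ZA_scaleC)
  hence "v - ZA A l v = (\<Sum>j\<in>UNIV. scaleC (l$j) (resolv A l (A j x) - ZA A l (resolv A l (A j x))))"
    unfolding v_def by (simp add: scaleC_diff_right sum_subtractf)
  also have "\<dots> = (\<Sum>j\<in>UNIV. scaleC (l$j) (A j x))" by (simp only: resolv_eq[OF l])
  also have "\<dots> = ZA A l x" unfolding ZA_def ..
  finally show "x + v - ZA A l (x + v) = x" by (simp add: ZA_add algebra_simps)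
qed

definition F :: "complex^'d \<Rightarrow> 'x \<Rightarrow> 'y" where "F l x = C (resolv A l x)"

lemma F_gleason: "l \<in> dball \<Longrightarrow> F l x = C x + (\<Sum>j\<in>UNIV. scaleC (l$j) (F l (A j x)))"
  unfolding F_def by (subst resolv_gleason) (auto simp: blin_linear[OF blinC] blin_sum[OF blinC])

lemma F_zero_pt: "F 0 x = C x"
  unfolding F_def by (simp add: resolv_zero_pt)

lemma F_add: "l \<in> dball \<Longrightarrow> F l (x + y) = F l x + F l y"
  unfolding F_def by (simp add: resolv_add blin_linear[OF blinC])

lemma F_scaleC: "l \<in> dball \<Longrightarrow> F l (scaleC c x) = scaleC c (F l x)"
  unfolding F_def by (simp add: resolv_scaleC blin_linear[OF blinC])

lemma F_diff: "l \<in> dball \<Longrightarrow> F l (x - y) = F l x - F l y"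
  unfolding F_def by (simp add: resolv_diff blin_diff[OF blinC])

lemma contr_x: "(\<Sum>j\<in>UNIV. (norm (A j x))^2) + (norm (C x))^2 \<le> (norm x)^2"
  using contr unfolding colig_contractive_def
proof -
  have "(\<Sum>j\<in>UNIV. (norm (A j x + B j 0))^2) + (norm (C x + D 0))^2 \<le> (norm x)^2 + (norm (0::'u))^2"
    using contr unfolding colig_contractive_def by blast
  thus ?thesis by (simp add: blin_zero[OF blinB] blin_zero[OF blinD])
qed

lemma contrA: "(\<Sum>j\<in>UNIV. (norm (A j x))^2) \<le> (norm x)^2"
  using contr_x[of x] zero_le_power2[of "norm (C x)"] by linarith

lemma ZAstar_add: "ZAstar A z (x + y) = ZAstar A z x + ZAstar A z y"
  unfolding ZAstar_def by (simp add: adj_add[OF blinA] scaleC_add_right sum.distrib)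

lemma ZAstar_scaleC: "ZAstar A z (scaleC c x) = scaleC c (ZAstar A z x)"
  unfolding ZAstar_def by (simp add: adj_scaleC[OF blinA] scaleC_sum_right scaleC_comm)

lemma ZAstar_diff: "ZAstar A z (x - y) = ZAstar A z x - ZAstar A z y"
  unfolding ZAstar_def by (simp add: adj_diff[OF blinA] scaleC_diff_right sum_subtractf)

lemma ZAstar_bound: "(norm (ZAstar A z w))^2 \<le> Re (ip z z) * (norm w)^2"
proof -
  have "(norm (ZAstar A z w))^2 \<le> (\<Sum>j\<in>UNIV. (norm (scaleC (cnj (z$j)) w))^2)"
    unfolding ZAstar_def by (rule norm_sq_sum_adj_bound[OF blinA contrA])
  also have "\<dots> = Re (ip z z) * (norm w)^2"
    by (simp add: norm_scaleC ip_self_re power_mult_distrib sum_distrib_right)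
  finally show ?thesis .
qed

lemma ee_ex1: assumes z: "z \<in> dball" shows "\<exists>!w. w - ZAstar A z w = adj C y"
proof -
  define r where "r = sqrt (Re (ip z z))"
  have r: "0 \<le> r" "r < 1" using z unfolding r_def dball_def by (auto simp: ip_self_re intro: sum_nonneg)
  have "\<exists>!w. adj C y + ZAstar A z w = w"
  proof (rule banach_fix_type[OF r])
    show "\<forall>x y'. dist (adj C y + ZAstar A z x) (adj C y + ZAstar A z y') \<le> r * dist x y'"
    proof (intro allI)
      fix x y'
      have "(norm (ZAstar A z (x - y')))^2 \<le> (r * norm (x - y'))^2"
        using ZAstar_bound[of z "x - y'"] r unfolding r_def
        by (simp add: power_mult_distrib)
      hence "norm (ZAstar A z (x - y')) \<le> r * norm (x - y')"
        using r by (meson mult_nonneg_nonneg norm_ge_zero power2_le_imp_le)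
      thus "dist (adj C y + ZAstar A z x) (adj C y + ZAstar A z y') \<le> r * dist x y'"
        by (simp add: dist_norm ZAstar_diff)
    qed
  qed
  moreover have "adj C y + ZAstar A z w = w \<longleftrightarrow> w - ZAstar A z w = adj C y" for w
    by (auto simp: algebra_simps)
  ultimately show ?thesis by simp
qed

definition ee :: "complex^'d \<Rightarrow> 'y \<Rightarrow> 'x" where
  "ee z y = (THE w. w - ZAstar A z w = adj C y)"

lemma ee_eq: "z \<in> dball \<Longrightarrow> ee z y - ZAstar A z (ee z y) = adj C y"
  unfolding ee_def by (rule theI'[OF ee_ex1])

lemma ee_unique: "z \<in> dball \<Longrightarrow> w - ZAstar A z w = adj C y \<Longrightarrow> ee z y = w"
  using ee_ex1 ee_eq by blast

lemma ee_add: "z \<in> dball \<Longrightarrow> ee z (y + y') = ee z y + ee z y'"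
proof (rule ee_unique)
  assume z: "z \<in> dball"
  show "ee z y + ee z y' - ZAstar A z (ee z y + ee z y') = adj C (y + y')"
  proof -
    have "ee z y + ee z y' - ZAstar A z (ee z y + ee z y') = (ee z y - ZAstar A z (ee z y)) + (ee z y' - ZAstar A z (ee z y'))"
      by (simp add: ZAstar_add algebra_simps)
    thus ?thesis by (simp only: ee_eq[OF z] adj_add[OF blinC])
  qed
qed

lemma ee_scaleC: "z \<in> dball \<Longrightarrow> ee z (scaleC c y) = scaleC c (ee z y)"
proof (rule ee_unique)
  assume z: "z \<in> dball"
  show "scaleC c (ee z y) - ZAstar A z (scaleC c (ee z y)) = adj C (scaleC c y)"
    using ee_eq[OF z, of y] by (simp add: ZAstar_scaleC adj_scaleC[OF blinC] scaleC_diff_right[symmetric])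
qed

lemma F_adj: assumes z: "z \<in> dball" shows "cinner (F z x) y = cinner x (ee z y)"
proof -
  define w where "w = resolv A z x"
  define e where "e = ee z y"
  have wx: "w - ZA A z w = x" unfolding w_def by (rule resolv_eq[OF z])
  have "cinner (F z x) y = cinner w (adj C y)" unfolding F_def w_def by (simp add: adj_prop[OF blinC])
  also have "adj C y = e - ZAstar A z e" unfolding e_def by (simp add: ee_eq[OF z])
  also have "cinner w (e - ZAstar A z e) = cinner w e - (\<Sum>j\<in>UNIV. cinner (A j w) (scaleC (cnj (z$j)) e))"
    unfolding ZAstar_def by (simp add: cinner_diff_right cinner_sum_right adj_prop[OF blinA])
  also have "\<dots> = cinner (w - ZA A z w) e"
    unfolding ZA_def by (simp add: cinner_diff_left cinner_sum_left cinner_scaleC_left cinner_scaleC_right)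
  finally show ?thesis unfolding e_def wx .
qed

definition ss :: "complex^'d \<Rightarrow> 'y \<Rightarrow> 'u" where
  "ss z y = adj D y + (\<Sum>j\<in>UNIV. adj (B j) (scaleC (cnj (z$j)) (ee z y)))"

lemma S_adj: assumes z: "z \<in> dball" shows "adj (S z) y = ss z y"
proof (rule adj_eqI[OF Sblin[OF z]])
  fix u
  have "cinner (S z u) y = cinner (D u) y + cinner (F z (ZB B z u)) y"
    unfolding S_formula[OF z] F_def by (simp add: cinner_add_left)
  also have "\<dots> = cinner u (adj D y) + cinner (ZB B z u) (ee z y)"
    by (simp add: adj_prop[OF blinD] F_adj[OF z])
  also have "cinner (ZB B z u) (ee z y) = (\<Sum>j\<in>UNIV. cinner u (adj (B j) (scaleC (cnj (z$j)) (ee z y))))"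
    unfolding ZB_def by (simp add: cinner_sum_left cinner_scaleC_left cinner_scaleC_right adj_prop[OF blinB, symmetric])
  finally show "cinner (S z u) y = cinner u (ss z y)"
    unfolding ss_def by (simp add: cinner_add_right cinner_sum_right)
qed

end




lemma polar_sum4: "(\<Sum>k<(4::nat). f k) = f 0 + f 1 + f 2 + f 3"
  by (simp add: numeral_eq_Suc)

locale rsetup2 = rsetup S A B C D
  for S :: "complex^'d \<Rightarrow> 'u::chilbert \<Rightarrow> 'y::chilbert"
    and A :: "'d::finite \<Rightarrow> 'x::chilbert \<Rightarrow> 'x"
    and B :: "'d \<Rightarrow> 'u \<Rightarrow> 'x"
    and C :: "'x \<Rightarrow> 'y"
    and D :: "'u \<Rightarrow> 'y" +
  assumes wc: "weakly_coisometric A B C D"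
begin

lemma dgen_eq: "dgen A C z y = (\<lambda>j. scaleC (cnj (z$j)) (ee z y))"
  unfolding dgen_def ee_def Let_def ..

lemma ZAstar_ee: "z \<in> dball \<Longrightarrow> (\<Sum>j\<in>UNIV. adj (A j) (scaleC (cnj (z$j)) (ee z y))) = ee z y - adj C y"
  using ee_eq[of z y] unfolding ZAstar_def by (simp add: algebra_simps)

lemma dspan_sub: "h \<in> dspan A C \<Longrightarrow> h \<in> dspace A C"
  unfolding dspace_def by (intro CollectI allI impI bexI[of _ h]) auto

lemma wc_pair:
  assumes z1: "z1 \<in> dball" and z2: "z2 \<in> dball"
  shows "(norm (ee z1 y1 + scaleC c (ee z2 y2)))^2 + (norm (ss z1 y1 + scaleC c (ss z2 y2)))^2
    = (\<Sum>j\<in>UNIV. (norm (scaleC (cnj (z1$j)) (ee z1 y1) + scaleC c (scaleC (cnj (z2$j)) (ee z2 y2))))^2)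
      + (norm (y1 + scaleC c y2))^2"
proof -
  define cc where "cc = (\<lambda>i::nat. if i = 0 then 1 else c)"
  define zz where "zz = (\<lambda>i::nat. if i = 0 then z1 else z2)"
  define yy where "yy = (\<lambda>i::nat. if i = 0 then y1 else y2)"
  define h where "h = (\<lambda>j. \<Sum>i<2. scaleC (cc i) (dgen A C (zz i) (yy i) j))"
  have hspan: "h \<in> dspan A C" unfolding dspan_def h_def
    by (intro CollectI exI[of _ 2] exI[of _ cc] exI[of _ zz] exI[of _ yy]) (auto simp: zz_def z1 z2)
  have two: "{..<2::nat} = {0, 1}" by auto
  have hj: "h j = scaleC (cnj (z1$j)) (ee z1 y1) + scaleC c (scaleC (cnj (z2$j)) (ee z2 y2))" for j
    unfolding h_def two by (simp add: cc_def zz_def yy_def dgen_eq scaleC_one)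
  define yv where "yv = y1 + scaleC c y2"
  have W: "(norm ((\<Sum>j\<in>UNIV. adj (A j) (h j)) + adj C yv))^2
          + (norm ((\<Sum>j\<in>UNIV. adj (B j) (h j)) + adj D yv))^2
        = (\<Sum>j\<in>UNIV. (norm (h j))^2) + (norm yv)^2"
    using wc dspan_sub[OF hspan] unfolding weakly_coisometric_def by blast
  have a1: "(\<Sum>j\<in>UNIV. adj (A j) (h j)) + adj C yv = ee z1 y1 + scaleC c (ee z2 y2)"
  proof -
    have "(\<Sum>j\<in>UNIV. adj (A j) (h j)) = (\<Sum>j\<in>UNIV. adj (A j) (scaleC (cnj (z1$j)) (ee z1 y1))) + scaleC c (\<Sum>j\<in>UNIV. adj (A j) (scaleC (cnj (z2$j)) (ee z2 y2)))"
      unfolding hj by (simp only: adj_add[OF blinA] adj_scaleC[OF blinA] sum.distrib scaleC_sum_right)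
    hence "(\<Sum>j\<in>UNIV. adj (A j) (h j)) = (ee z1 y1 - adj C y1) + scaleC c (ee z2 y2 - adj C y2)"
      by (simp only: ZAstar_ee z1 z2)
    thus ?thesis unfolding yv_def by (simp add: adj_add[OF blinC] adj_scaleC[OF blinC] scaleC_diff_right algebra_simps)
  qed
  have a2: "(\<Sum>j\<in>UNIV. adj (B j) (h j)) + adj D yv = ss z1 y1 + scaleC c (ss z2 y2)"
    unfolding hj yv_def ss_def
    by (simp add: adj_add[OF blinB] adj_scaleC[OF blinB] sum.distrib scaleC_sum_right[symmetric]
        adj_add[OF blinD] adj_scaleC[OF blinD] scaleC_add_right algebra_simps)
  show ?thesis using W unfolding a1 a2 unfolding hj yv_def .
qed

lemma gram_pre:
  assumes z1: "z1 \<in> dball" and z2: "z2 \<in> dball"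
  shows "cinner (ee z1 y1) (ee z2 y2) + cinner (ss z1 y1) (ss z2 y2)
       = ip z2 z1 * cinner (ee z1 y1) (ee z2 y2) + cinner y1 y2"
proof -
  define e1 where "e1 = ee z1 y1"
  define e2 where "e2 = ee z2 y2"
  define s1 where "s1 = ss z1 y1"
  define s2 where "s2 = ss z2 y2"
  define g1 where "g1 = (\<lambda>j. scaleC (cnj (z1$j)) e1)"
  define g2 where "g2 = (\<lambda>j. scaleC (cnj (z2$j)) e2)"
  have P: "(norm (e1 + scaleC c e2))^2 + (norm (s1 + scaleC c s2))^2
        = (\<Sum>j\<in>UNIV. (norm (g1 j + scaleC c (g2 j)))^2) + (norm (y1 + scaleC c y2))^2" for c
    using wc_pair[OF z1 z2, of y1 c y2] unfolding e1_def e2_def s1_def s2_def g1_def g2_def .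
  have "cinner e1 e2 + cinner s1 s2
     = (1/4) * (\<Sum>k<(4::nat). \<i>^k * complex_of_real ((norm (e1 + scaleC (\<i>^k) e2))^2 + (norm (s1 + scaleC (\<i>^k) s2))^2))"
    by (simp only: polarization[of e1 e2] polarization[of s1 s2] polar_sum4 of_real_add) (simp add: algebra_simps)
  also have "\<dots> = (1/4) * (\<Sum>k<(4::nat). \<i>^k * complex_of_real ((\<Sum>j\<in>UNIV. (norm (g1 j + scaleC (\<i>^k) (g2 j)))^2) + (norm (y1 + scaleC (\<i>^k) y2))^2))"
    by (simp only: P)
  also have "\<dots> = (\<Sum>j\<in>UNIV. cinner (g1 j) (g2 j)) + cinner y1 y2"
    by (simp only: polarization[of "g1 _" "g2 _"] polarization[of y1 y2] polar_sum4 of_real_add of_real_sum)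
       (simp add: algebra_simps sum.distrib sum_distrib_left sum_subtractf sum_negf)
  also have "(\<Sum>j\<in>UNIV. cinner (g1 j) (g2 j)) = ip z2 z1 * cinner e1 e2"
    unfolding g1_def g2_def ip_def by (simp add: cinner_scaleC_left cinner_scaleC_right sum_distrib_left algebra_simps)
  finally show ?thesis unfolding e1_def e2_def s1_def s2_def .
qed

lemma ee_gram:
  assumes z1: "z1 \<in> dball" and z2: "z2 \<in> dball"
  shows "cinner (ee z1 y1) (ee z2 y2) = kd z2 z1 * (cinner y1 y2 - cinner (ss z1 y1) (ss z2 y2))"
proof -
  have E: "cinner (ee z1 y1) (ee z2 y2) * (1 - ip z2 z1) = cinner y1 y2 - cinner (ss z1 y1) (ss z2 y2)"
    using gram_pre[OF z1 z2, of y1 y2] by (simp add: algebra_simps)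
  have "cinner (ee z1 y1) (ee z2 y2) = (kd z2 z1 * (1 - ip z2 z1)) * cinner (ee z1 y1) (ee z2 y2)"
    using kd_ip(1)[OF z2 z1] by simp
  also have "\<dots> = kd z2 z1 * (cinner (ee z1 y1) (ee z2 y2) * (1 - ip z2 z1))" by (simp only: mult_ac)
  finally show ?thesis unfolding E .
qed

end




primrec lsum :: "('a \<Rightarrow> 'b::comm_monoid_add) \<Rightarrow> 'a list \<Rightarrow> 'b" where
  "lsum f [] = 0"
| "lsum f (x # xs) = f x + lsum f xs"

lemma lsum_append[simp]: "lsum f (xs @ ys) = lsum f xs + lsum f ys"
  by (induction xs) (auto simp: add.assoc)

lemma lsum_map[simp]: "lsum f (map g xs) = lsum (\<lambda>x. f (g x)) xs"
  by (induction xs) auto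

lemma lsum_add: "lsum (\<lambda>x. f x + g x) xs = lsum f xs + lsum g xs"
  by (induction xs) (auto simp: algebra_simps)

lemma lsum_zero[simp]: "lsum (\<lambda>x. 0) xs = 0"
  by (induction xs) auto

lemma lsum_cong: "(\<And>x. x \<in> set xs \<Longrightarrow> f x = g x) \<Longrightarrow> lsum f xs = lsum g xs"
  by (induction xs) auto

lemma lsum_neg: "lsum (\<lambda>x. - f x) xs = - lsum f xs"
  for f :: "'a \<Rightarrow> 'b::ab_group_add"
  by (induction xs) auto

lemma lsum_diff: "lsum (\<lambda>x. f x - g x) xs = lsum f xs - lsum g xs"
  for f :: "'a \<Rightarrow> 'b::ab_group_add"
  by (induction xs) auto

lemma lsum_mult_left: "lsum (\<lambda>x. c * f x) xs = c * lsum f xs"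
  for f :: "'a \<Rightarrow> 'b::comm_ring"
  by (induction xs) (auto simp: algebra_simps)

lemma lsum_mult_right: "lsum (\<lambda>x. f x * c) xs = lsum f xs * c"
  for f :: "'a \<Rightarrow> 'b::comm_ring"
  by (induction xs) (auto simp: algebra_simps)

lemma lsum_swap: "lsum (\<lambda>x. lsum (\<lambda>y. f x y) ys) xs = lsum (\<lambda>y. lsum (\<lambda>x. f x y) xs) ys"
  by (induction xs) (auto simp: lsum_add)

lemma lsum_sum: "lsum (\<lambda>x. \<Sum>j\<in>J. f x j) xs = (\<Sum>j\<in>J. lsum (\<lambda>x. f x j) xs)"
  by (induction xs) (auto simp: sum.distrib)

lemma lsum_Re: "Re (lsum f xs) = lsum (\<lambda>x. Re (f x)) xs"
  by (induction xs) auto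

lemma lsum_Im: "Im (lsum f xs) = lsum (\<lambda>x. Im (f x)) xs"
  by (induction xs) auto

lemma lsum_cnj: "cnj (lsum f xs) = lsum (\<lambda>x. cnj (f x)) xs"
  by (induction xs) auto

lemma lsum_nonneg: "(\<And>x. x \<in> set xs \<Longrightarrow> 0 \<le> f x) \<Longrightarrow> 0 \<le> lsum f xs"
  for f :: "'a \<Rightarrow> 'b::ordered_comm_monoid_add"
  by (induction xs) auto

lemma lsum_sums: "(\<And>x. x \<in> set xs \<Longrightarrow> (\<lambda>n. f x n) sums g x) \<Longrightarrow> (\<lambda>n. lsum (\<lambda>x. f x n) xs) sums lsum g xs"
  for f :: "'a \<Rightarrow> nat \<Rightarrow> 'b::real_normed_vector"
  by (induction xs) (auto intro: sums_add)

lemma cinner_lsum_left: "cinner (lsum f xs) y = lsum (\<lambda>x. cinner (f x) y) xs"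
  by (induction xs) (auto simp: cinner_add_left)

lemma cinner_lsum_right: "cinner y (lsum f xs) = lsum (\<lambda>x. cinner y (f x)) xs"
  by (induction xs) (auto simp: cinner_add_right)

lemma scaleC_lsum: "scaleC c (lsum f xs) = lsum (\<lambda>x. scaleC c (f x)) xs"
  by (induction xs) (auto simp: scaleC_add_right)

lemma blin_lsum: "blin T \<Longrightarrow> T (lsum f xs) = lsum (\<lambda>x. T (f x)) xs"
  by (induction xs) (auto simp: blin_zero blin_linear)

lemma adj_lsum: "blin T \<Longrightarrow> adj T (lsum f xs) = lsum (\<lambda>x. adj T (f x)) xs"
  by (induction xs) (auto simp: adj_zero adj_add)

lemma norm_lsum_sq: "(norm (lsum f xs))^2 = Re (lsum (\<lambda>x. lsum (\<lambda>y. cinner (f x) (f y)) xs) xs)"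
proof -
  have "cinner (lsum f xs) (lsum f xs) = lsum (\<lambda>x. lsum (\<lambda>y. cinner (f x) (f y)) xs) xs"
    by (simp add: cinner_lsum_left cinner_lsum_right) (rule lsum_swap)
  thus ?thesis by (metis cinner_self_re)
qed

definition pr :: "(complex^'d \<Rightarrow> 'y::chilbert) \<Rightarrow> ((complex^'d) \<times> 'y) list \<Rightarrow> complex" where
  "pr f K = lsum (\<lambda>a. cinner (f (fst a)) (snd a)) K"

definition BB :: "((complex^'d) \<times> 'y::chilbert) list \<Rightarrow> ((complex^'d) \<times> 'y) list \<Rightarrow> complex" where
  "BB K K' = lsum (\<lambda>a. lsum (\<lambda>b. kd (fst b) (fst a) * cinner (snd a) (snd b)) K') K"

definition inball :: "((complex^'d) \<times> 'y) list \<Rightarrow> bool" where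
  "inball K \<longleftrightarrow> (\<forall>a\<in>set K. fst a \<in> dball)"

definition kf :: "((complex^'d) \<times> 'y::chilbert) list \<Rightarrow> complex^'d \<Rightarrow> 'y" where
  "kf K m = lsum (\<lambda>a. scaleC (kd m (fst a)) (snd a)) K"

definition scl :: "complex \<Rightarrow> ((complex^'d) \<times> 'y::chilbert) list \<Rightarrow> ((complex^'d) \<times> 'y) list" where
  "scl t K = map (\<lambda>a. (fst a, scaleC t (snd a))) K"

lemma inball_append[simp]: "inball (K @ K') \<longleftrightarrow> inball K \<and> inball K'"
  unfolding inball_def by auto

lemma inball_scl[simp]: "inball (scl t K) \<longleftrightarrow> inball K"
  unfolding inball_def scl_def by auto

lemma inball_Nil[simp]: "inball []" unfolding inball_def by simp

lemma pr_append: "pr f (K @ K') = pr f K + pr f K'" unfolding pr_def by simp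

lemma pr_scl: "pr f (scl t K) = cnj t * pr f K"
  unfolding pr_def scl_def by (simp add: cinner_scaleC_right lsum_mult_left)

lemma pr_add: "pr (\<lambda>m. f m + g m) K = pr f K + pr g K"
  unfolding pr_def by (simp add: cinner_add_left lsum_add)

lemma pr_diff: "pr (\<lambda>m. f m - g m) K = pr f K - pr g K"
  unfolding pr_def by (simp add: cinner_diff_left lsum_diff)

lemma pr_scaleC: "pr (\<lambda>m. scaleC c (f m)) K = c * pr f K"
  unfolding pr_def by (simp add: cinner_scaleC_left lsum_mult_left)

lemma pr_cong: "inball K \<Longrightarrow> (\<And>m. m \<in> dball \<Longrightarrow> f m = g m) \<Longrightarrow> pr f K = pr g K"
  unfolding pr_def inball_def by (intro lsum_cong) auto

lemma kd_cnj: "cnj (kd a b) = kd b a"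
  unfolding kd_def by (simp add: ip_cnj)

lemma BB_herm: "BB K' K = cnj (BB K K')"
  unfolding BB_def by (simp add: lsum_cnj kd_cnj cinner_commute[symmetric]) (rule lsum_swap)

lemma BB_append_left: "BB (K1 @ K2) K' = BB K1 K' + BB K2 K'" unfolding BB_def by simp

lemma BB_append_right: "BB K (K1 @ K2) = BB K K1 + BB K K2" unfolding BB_def by (simp add: lsum_add)

lemma BB_scl_left: "BB (scl t K) K' = t * BB K K'"
  unfolding BB_def scl_def by (simp add: cinner_scaleC_left lsum_mult_left[symmetric] algebra_simps)

lemma BB_scl_right: "BB K (scl t K') = cnj t * BB K K'"
  unfolding BB_def scl_def by (simp add: cinner_scaleC_right lsum_mult_left[symmetric] algebra_simps)

lemma BB_self_real: "Im (BB K K) = 0"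
proof -
  have "Im (BB K K) = Im (cnj (BB K K))" by (subst BB_herm[symmetric]) (rule refl)
  thus ?thesis by simp
qed

lemma BB_self_eq: "BB K K = complex_of_real (Re (BB K K))"
  using BB_self_real by (simp add: complex_eq_iff)

lemma pr_kf: "pr (kf K) K' = BB K K'"
  unfolding pr_def kf_def BB_def
  by (simp add: cinner_lsum_left cinner_scaleC_left) (rule lsum_swap)

subsection \<open>Positivity\<close>

definition BBm :: "nat \<Rightarrow> ((complex^'d) \<times> 'y::chilbert) list \<Rightarrow> ((complex^'d) \<times> 'y) list \<Rightarrow> complex" where
  "BBm m K K' = lsum (\<lambda>a. lsum (\<lambda>b. (ip (fst b) (fst a))^m * cinner (snd a) (snd b)) K') K"

definition mapj :: "'d \<Rightarrow> ((complex^'d::finite) \<times> 'y::chilbert) list \<Rightarrow> ((complex^'d) \<times> 'y) list" where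
  "mapj j K = map (\<lambda>a. (fst a, scaleC (cnj (fst a $ j)) (snd a))) K"

lemma inball_mapj[simp]: "inball (mapj j K) \<longleftrightarrow> inball K"
  unfolding inball_def mapj_def by auto

lemma BBm_0: "BBm 0 K K = complex_of_real ((norm (lsum snd K))^2)"
proof -
  have "BBm 0 K K = cinner (lsum snd K) (lsum snd K)"
    unfolding BBm_def by (simp add: cinner_lsum_left cinner_lsum_right) (rule lsum_swap)
  thus ?thesis by (simp only: cinner_self_norm)
qed

lemma BBm_Suc: "BBm (Suc m) K K = (\<Sum>j\<in>UNIV. BBm m (mapj j K) (mapj j K))"
  for K :: "((complex^'d::finite) \<times> 'y::chilbert) list"
proof -
  have "BBm (Suc m) K K = lsum (\<lambda>a. lsum (\<lambda>b. \<Sum>j\<in>UNIV. (ip (fst b) (fst a))^m * (cinner (scaleC (cnj (fst a $ j)) (snd a)) (scaleC (cnj (fst b $ j)) (snd b)))) K) K"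
    unfolding BBm_def
    by (intro lsum_cong) (simp add: cinner_scaleC_left cinner_scaleC_right ip_def sum_distrib_left sum_distrib_right algebra_simps)
  thus ?thesis unfolding BBm_def mapj_def by (simp add: lsum_sum)
qed

lemma BBm_nonneg: "0 \<le> Re (BBm m K K)"
proof (induction m arbitrary: K)
  case 0 thus ?case by (simp add: BBm_0)
next
  case (Suc m) thus ?case by (simp add: BBm_Suc sum_nonneg)
qed

lemma BB_sums: assumes K: "inball K" and K': "inball K'" shows "(\<lambda>m. BBm m K K') sums BB K K'"
  unfolding BBm_def BB_def
proof (rule lsum_sums, rule lsum_sums)
  fix a b assume "a \<in> set K" "b \<in> set K'"
  hence ab: "fst a \<in> dball" "fst b \<in> dball" using K K' unfolding inball_def by auto
  have "(\<lambda>n. (ip (fst b) (fst a))^n) sums (1 / (1 - ip (fst b) (fst a)))"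
    using geometric_sums[of "ip (fst b) (fst a)"] dball_ip_lt1[OF ab(2,1)] by (simp add: divide_inverse)
  thus "(\<lambda>n. (ip (fst b) (fst a))^n * cinner (snd a) (snd b)) sums (kd (fst b) (fst a) * cinner (snd a) (snd b))"
    unfolding kd_def by (rule sums_mult2)
qed

lemma BB_nonneg: assumes "inball K" shows "0 \<le> Re (BB K K)"
proof -
  have s: "(\<lambda>m. Re (BBm m K K)) sums Re (BB K K)" using sums_Re[OF BB_sums[OF assms assms]] .
  show ?thesis by (rule sums_le[OF _ sums_zero s]) (simp add: BBm_nonneg)
qed

subsection \<open>Cauchy-Schwarz for abstract forms\<close>

lemma quad_cs:
  fixes a c :: real and \<beta> :: complex
  assumes "\<And>t. 0 \<le> a + 2 * Re (cnj t * \<beta>) + (cmod t)^2 * c" and c0: "0 \<le> c"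
  shows "(cmod \<beta>)^2 \<le> a * c"
proof (cases "c > 0")
  case True
  have "0 \<le> a + 2 * Re (cnj (- \<beta> / complex_of_real c) * \<beta>) + (cmod (- \<beta> / complex_of_real c))^2 * c"
    by (rule assms(1))
  also have "cnj (- \<beta> / complex_of_real c) * \<beta> = - complex_of_real ((cmod \<beta>)^2 / c)"
    using complex_norm_square[of \<beta>] by (simp add: mult.commute del: of_real_power)
  also have "(cmod (- \<beta> / complex_of_real c))^2 * c = (cmod \<beta>)^2 / c"
    using True by (simp add: norm_divide power_divide power2_eq_square)
  finally have "0 \<le> a - (cmod \<beta>)^2 / c" by simp
  thus ?thesis using True by (simp add: field_simps)
next
  case False
  hence c: "c = 0" using False c0 by simp
  show ?thesis
  proof (rule ccontr)
    assume "\<not> (cmod \<beta>)^2 \<le> a * c"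
    hence b: "\<beta> \<noteq> 0" using c by auto
    have "0 \<le> a + 2 * Re (cnj (- complex_of_real s * \<beta>) * \<beta>)" for s using assms(1)[of "- complex_of_real s * \<beta>"] c by simp
    moreover have eq: "(cmod \<beta>)^2 = Re \<beta> * Re \<beta> + Im \<beta> * Im \<beta>" using cmod_power2[of \<beta>] by (simp only: power2_eq_square)
    ultimately have "0 \<le> a - 2 * s * (cmod \<beta>)^2" for s
      by (simp add: mult.assoc eq)
    from this[of "(\<bar>a\<bar> + 1) / (2 * (cmod \<beta>)^2)"] b
    have h: "2 * (cmod \<beta>)\<^sup>2 + \<bar>a\<bar> * (2 * (cmod \<beta>)\<^sup>2) \<le> a * (2 * (cmod \<beta>)\<^sup>2)" by (simp add: field_simps)
    have p: "0 < 2*(cmod \<beta>)^2" using b by simp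
    have "a * (2*(cmod \<beta>)^2) \<le> \<bar>a\<bar> * (2*(cmod \<beta>)^2)" using p by (intro mult_right_mono) auto
    thus False using h p by linarith
  qed
qed




lemma Re_mult_cnj_self: "Re (t * cnj t * z) = (cmod t)^2 * Re z"
proof -
  have "t * cnj t * z = complex_of_real ((cmod t)^2) * z" by (simp only: complex_norm_square)
  hence "Re (t * cnj t * z) = Re (complex_of_real ((cmod t)^2) * z)" by (rule arg_cong)
  also have "\<dots> = (cmod t)^2 * Re z" by (simp only: times_complex.sel Re_complex_of_real Im_complex_of_real)
  finally show ?thesis .
qed

lemma BB_quad: "Re (BB (K @ scl t K') (K @ scl t K')) = Re (BB K K) + 2 * Re (cnj t * BB K K') + (cmod t)^2 * Re (BB K' K')"
proof -
  have "BB (K @ scl t K') (K @ scl t K') = BB K K + cnj t * BB K K' + t * BB K' K + t * cnj t * BB K' K'"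
    by (simp add: BB_append_left BB_append_right BB_scl_left BB_scl_right algebra_simps)
  moreover have "Re (t * BB K' K) = Re (cnj t * BB K K')"
    by (subst BB_herm) simp
  ultimately show ?thesis by (simp only: plus_complex.sel Re_mult_cnj_self)
qed

lemma BB_cs: assumes "inball K" "inball K'"
  shows "(cmod (BB K K'))^2 \<le> Re (BB K K) * Re (BB K' K')"
proof (rule quad_cs)
  fix t
  show "0 \<le> Re (BB K K) + 2 * Re (cnj t * BB K K') + (cmod t)^2 * Re (BB K' K')"
    using BB_nonneg[of "K @ scl t K'"] assms by (simp add: BB_quad)
qed (use BB_nonneg assms in auto)

lemma lsum_nth: "lsum g K = (\<Sum>i<length K. g (K!i))"
  by (induction K) (simp_all add: sum.lessThan_Suc_shift del: sum.lessThan_Suc)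

lemma rk_bound_iff:
  "rk_bound f C \<longleftrightarrow> (\<forall>K. inball K \<longrightarrow> (cmod (pr f K))^2 \<le> C * Re (BB K K))"
proof -
  have key: "(\<Sum>i<length K. cinner (f (fst (K!i))) (snd (K!i))) = pr f K
     \<and> (\<Sum>i<length K. \<Sum>j<length K. kd (fst (K!i)) (fst (K!j)) * cinner (snd (K!j)) (snd (K!i))) = BB K K"
    for K :: "((complex^'a) \<times> 'b) list"
  proof
    show "(\<Sum>i<length K. cinner (f (fst (K!i))) (snd (K!i))) = pr f K" unfolding pr_def lsum_nth ..
    have "BB K K = (\<Sum>i<length K. \<Sum>j<length K. kd (fst (K!j)) (fst (K!i)) * cinner (snd (K!i)) (snd (K!j)))"
      unfolding BB_def lsum_nth ..
    also have "\<dots> = (\<Sum>i<length K. \<Sum>j<length K. kd (fst (K!i)) (fst (K!j)) * cinner (snd (K!j)) (snd (K!i)))"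
      by (rule sum.swap)
    finally show "(\<Sum>i<length K. \<Sum>j<length K. kd (fst (K!i)) (fst (K!j)) * cinner (snd (K!j)) (snd (K!i))) = BB K K" ..
  qed
  show ?thesis
  proof
    assume R: "rk_bound f C"
    show "\<forall>K. inball K \<longrightarrow> (cmod (pr f K))^2 \<le> C * Re (BB K K)"
    proof (intro allI impI)
      fix K :: "((complex^'a) \<times> 'b) list" assume K: "inball K"
      have "\<forall>i<length K. fst (K!i) \<in> dball" using K unfolding inball_def by auto
      hence "(cmod (\<Sum>i<length K. cinner (f (fst (K!i))) (snd (K!i))))^2
        \<le> C * Re (\<Sum>i<length K. \<Sum>j<length K. kd (fst (K!i)) (fst (K!j)) * cinner (snd (K!j)) (snd (K!i)))"
        using R[unfolded rk_bound_def, rule_format, of "length K" "\<lambda>i. fst (K!i)" "\<lambda>i. snd (K!i)"] by blast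
      thus "(cmod (pr f K))^2 \<le> C * Re (BB K K)" using key[of K] by simp
    qed
  next
    assume R: "\<forall>K. inball K \<longrightarrow> (cmod (pr f K))^2 \<le> C * Re (BB K K)"
    show "rk_bound f C" unfolding rk_bound_def
    proof (intro allI impI)
      fix n and p :: "nat \<Rightarrow> complex^'a" and y :: "nat \<Rightarrow> 'b"
      assume P: "\<forall>i<n. p i \<in> dball"
      define K where "K = map (\<lambda>i. (p i, y i)) [0..<n]"
      have len: "length K = n" unfolding K_def by simp
      have nth: "i < n \<Longrightarrow> K!i = (p i, y i)" for i unfolding K_def by simp
      have Kb: "inball K" using P unfolding inball_def K_def by auto
      have e1: "(\<Sum>i<n. cinner (f (p i)) (y i)) = pr f K"
        using key[of K] len nth by (metis (no_types, lifting) fst_conv lessThan_iff snd_conv sum.cong)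
      have e2: "(\<Sum>i<n. \<Sum>j<n. kd (p i) (p j) * cinner (y j) (y i)) = BB K K"
      proof -
        have "(\<Sum>i<n. \<Sum>j<n. kd (p i) (p j) * cinner (y j) (y i))
            = (\<Sum>i<length K. \<Sum>j<length K. kd (fst (K!i)) (fst (K!j)) * cinner (snd (K!j)) (snd (K!i)))"
          unfolding len by (intro sum.cong refl) (simp add: nth)
        thus ?thesis using key[of K] by simp
      qed
      show "(cmod (\<Sum>i<n. cinner (f (p i)) (y i)))^2 \<le> C * Re (\<Sum>i<n. \<Sum>j<n. kd (p i) (p j) * cinner (y j) (y i))"
        unfolding e1 e2 using R Kb by blast
    qed
  qed
qed

lemma rk_bound_mono: "rk_bound f C \<Longrightarrow> C \<le> C' \<Longrightarrow> rk_bound f C'"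
  unfolding rk_bound_iff
  by (meson BB_nonneg mult_right_mono order_trans)

lemma rk_bound_cong: "(\<And>m. m \<in> dball \<Longrightarrow> f m = g m) \<Longrightarrow> rk_bound f C = rk_bound g C"
  unfolding rk_bound_iff using pr_cong by metis

lemma rk_normsq_cong: "(\<And>m. m \<in> dball \<Longrightarrow> f m = g m) \<Longrightarrow> rk_normsq f = rk_normsq g"
  unfolding rk_normsq_def using rk_bound_cong by metis

lemma rk_mem_cong: "(\<And>m. m \<in> dball \<Longrightarrow> f m = g m) \<Longrightarrow> rk_mem f = rk_mem g"
  unfolding rk_mem_def using rk_bound_cong by metis

lemma rk_normsq_le: "0 \<le> C \<Longrightarrow> rk_bound f C \<Longrightarrow> rk_normsq f \<le> C"
  unfolding rk_normsq_def by (rule cInf_lower) (auto intro: bdd_belowI[of _ 0])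

lemma rk_normsq_prop:
  assumes "rk_mem f"
  shows "rk_bound f (rk_normsq f)" "0 \<le> rk_normsq f"
proof -
  define T where "T = {C. 0 \<le> C \<and> rk_bound f C}"
  obtain C0 where "rk_bound f C0" using assms unfolding rk_mem_def by blast
  hence "max C0 0 \<in> T" unfolding T_def by (auto intro: rk_bound_mono)
  hence Tne: "T \<noteq> {}" by blast
  show "0 \<le> rk_normsq f" unfolding rk_normsq_def T_def[symmetric]
    by (rule cInf_greatest[OF Tne]) (auto simp: T_def)
  show "rk_bound f (rk_normsq f)" unfolding rk_bound_iff
  proof (intro allI impI)
    fix K :: "((complex^'a) \<times> 'b) list" assume K: "inball K"
    show "(cmod (pr f K))^2 \<le> rk_normsq f * Re (BB K K)"
    proof (cases "Re (BB K K) = 0")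
      case True
      have "(cmod (pr f K))^2 \<le> C0 * Re (BB K K)" using \<open>rk_bound f C0\<close> K unfolding rk_bound_iff by blast
      thus ?thesis using True by simp
    next
      case False
      hence pos: "Re (BB K K) > 0" using BB_nonneg[OF K] by simp
      have "(cmod (pr f K))^2 / Re (BB K K) \<le> Inf T"
      proof (rule cInf_greatest[OF Tne])
        fix C assume "C \<in> T"
        hence "(cmod (pr f K))^2 \<le> C * Re (BB K K)" using K unfolding T_def rk_bound_iff by blast
        thus "(cmod (pr f K))^2 / Re (BB K K) \<le> C" using pos by (simp add: divide_le_eq)
      qed
      thus ?thesis using pos unfolding rk_normsq_def T_def[symmetric] by (simp add: divide_le_eq)
    qed
  qed
qed

lemma rk_bound_pr: "rk_mem f \<Longrightarrow> inball K \<Longrightarrow> (cmod (pr f K))^2 \<le> rk_normsq f * Re (BB K K)"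
  using rk_normsq_prop(1) unfolding rk_bound_iff by blast

lemma rk_normsq_gt:
  assumes "0 \<le> C" "C < rk_normsq f"
  shows "\<exists>K. inball K \<and> C * Re (BB K K) < (cmod (pr f K))^2"
proof (rule ccontr)
  assume "\<not> ?thesis"
  hence "rk_bound f C" unfolding rk_bound_iff by (auto simp: not_less)
  hence "rk_normsq f \<le> C" using rk_normsq_le assms by blast
  thus False using assms by simp
qed

lemma kf_bound: assumes "inball K" shows "rk_bound (kf K) (Re (BB K K))"
  unfolding rk_bound_iff pr_kf using BB_cs[OF assms] by blast

lemma kf_normsq: assumes K: "inball K" shows "rk_normsq (kf K) = Re (BB K K)" "rk_mem (kf K)"
proof -
  show mem: "rk_mem (kf K)" using kf_bound[OF K] unfolding rk_mem_def by blast
  have le: "rk_normsq (kf K) \<le> Re (BB K K)" by (rule rk_normsq_le[OF BB_nonneg[OF K] kf_bound[OF K]])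
  have "(cmod (BB K K))^2 \<le> rk_normsq (kf K) * Re (BB K K)" using rk_bound_pr[OF mem K] by (simp add: pr_kf)
  moreover have "cmod (BB K K) = Re (BB K K)" using BB_self_eq[of K] BB_nonneg[OF K] by (metis norm_of_real abs_of_nonneg)
  ultimately have "(Re (BB K K))^2 \<le> rk_normsq (kf K) * Re (BB K K)" by simp
  hence "Re (BB K K) \<le> rk_normsq (kf K)"
    using rk_normsq_prop(2)[OF mem] BB_nonneg[OF K]
    by (cases "Re (BB K K) = 0") (auto simp: power2_eq_square)
  thus "rk_normsq (kf K) = Re (BB K K)" using le by simp
qed




lemma cs2: fixes x0 y0 X Y :: real
  shows "(x0 * y0 + X * Y)^2 \<le> (x0^2 + X^2) * (y0^2 + Y^2)"
proof -
  have "(x0^2 + X^2) * (y0^2 + Y^2) - (x0 * y0 + X * Y)^2 = (x0 * Y - X * y0)^2"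
    by (simp add: power2_eq_square algebra_simps)
  thus ?thesis by (metis diff_ge_0_iff_ge zero_le_power2)
qed

lemma sum_sqrt_cs: fixes a b :: "'j \<Rightarrow> real"
  assumes "\<And>j. 0 \<le> a j" "\<And>j. 0 \<le> b j"
  shows "(\<Sum>j\<in>J. sqrt (a j) * sqrt (b j)) \<le> sqrt (\<Sum>j\<in>J. a j) * sqrt (\<Sum>j\<in>J. b j)"
proof -
  have "(\<Sum>j\<in>J. sqrt (a j) * sqrt (b j))^2 \<le> (\<Sum>j\<in>J. (sqrt (a j))^2) * (\<Sum>j\<in>J. (sqrt (b j))^2)"
    by (rule Cauchy_Schwarz_ineq_sum)
  also have "\<dots> = (\<Sum>j\<in>J. a j) * (\<Sum>j\<in>J. b j)" using assms by simp
  finally have "(\<Sum>j\<in>J. sqrt (a j) * sqrt (b j)) \<le> sqrt ((\<Sum>j\<in>J. a j) * (\<Sum>j\<in>J. b j))"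
    by (rule real_le_rsqrt)
  thus ?thesis by (simp add: real_sqrt_mult)
qed

lemma pr_row:
  fixes c :: "'y::chilbert" and g :: "'d::finite \<Rightarrow> complex^'d \<Rightarrow> 'y"
  shows "pr (\<lambda>m. c + (\<Sum>j\<in>UNIV. scaleC (m$j) (g j m))) K = cinner c (lsum snd K) + (\<Sum>j\<in>UNIV. pr (g j) (mapj j K))"
  unfolding pr_def mapj_def
  by (simp add: cinner_add_left cinner_sum_left cinner_scaleC_left cinner_scaleC_right lsum_add lsum_sum cinner_lsum_right)

lemma BB_row:
  fixes K :: "((complex^'d::finite) \<times> 'y::chilbert) list"
  assumes K: "inball K"
  shows "BB K K = complex_of_real ((norm (lsum snd K))^2) + (\<Sum>j\<in>UNIV. BB (mapj j K) (mapj j K))"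
proof -
  have "(\<Sum>j\<in>UNIV. BB (mapj j K) (mapj j K)) = lsum (\<lambda>a. lsum (\<lambda>b. kd (fst b) (fst a) * ip (fst b) (fst a) * cinner (snd a) (snd b)) K) K"
    unfolding BB_def mapj_def ip_def
    by (simp add: lsum_sum[symmetric] cinner_scaleC_left cinner_scaleC_right sum_distrib_left sum_distrib_right algebra_simps)
  moreover have "complex_of_real ((norm (lsum snd K))^2) = lsum (\<lambda>a. lsum (\<lambda>b. cinner (snd a) (snd b)) K) K"
  proof -
    have "complex_of_real ((norm (lsum snd K))^2) = cinner (lsum snd K) (lsum snd K)" by (simp only: cinner_self_norm)
    also have "\<dots> = lsum (\<lambda>a. lsum (\<lambda>b. cinner (snd a) (snd b)) K) K"
      by (simp add: cinner_lsum_left cinner_lsum_right) (rule lsum_swap)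
    finally show ?thesis .
  qed
  moreover have "BB K K = lsum (\<lambda>a. lsum (\<lambda>b. (1 + kd (fst b) (fst a) * ip (fst b) (fst a)) * cinner (snd a) (snd b)) K) K"
    unfolding BB_def
  proof (intro lsum_cong)
    fix a b assume "a \<in> set K" "b \<in> set K"
    hence "fst a \<in> dball" "fst b \<in> dball" using K unfolding inball_def by auto
    thus "kd (fst b) (fst a) * cinner (snd a) (snd b) = (1 + kd (fst b) (fst a) * ip (fst b) (fst a)) * cinner (snd a) (snd b)"
      using kd_ip(2) by metis
  qed
  ultimately show ?thesis by (simp add: distrib_right lsum_add)
qed

lemma row_bound:
  fixes c :: "'y::chilbert" and g :: "'d::finite \<Rightarrow> complex^'d \<Rightarrow> 'y" and Cj :: "'d \<Rightarrow> real"
  assumes gb: "\<And>j. rk_bound (g j) (Cj j)" and C0: "\<And>j. 0 \<le> Cj j"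
  shows "rk_bound (\<lambda>m. c + (\<Sum>j\<in>UNIV. scaleC (m$j) (g j m))) ((norm c)^2 + (\<Sum>j\<in>UNIV. Cj j))"
  unfolding rk_bound_iff
proof (intro allI impI)
  fix K :: "((complex^'d) \<times> 'y) list" assume K: "inball K"
  define b where "b = (\<lambda>j. Re (BB (mapj j K) (mapj j K)))"
  define n0 where "n0 = norm (lsum snd K)"
  have b0: "0 \<le> b j" for j unfolding b_def by (rule BB_nonneg) (simp add: K)
  have Pj: "cmod (pr (g j) (mapj j K)) \<le> sqrt (Cj j) * sqrt (b j)" for j
  proof -
    have "(cmod (pr (g j) (mapj j K)))^2 \<le> Cj j * b j" using gb[of j] K unfolding rk_bound_iff b_def by simp
    hence "cmod (pr (g j) (mapj j K)) \<le> sqrt (Cj j * b j)" by (rule real_le_rsqrt)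
    thus ?thesis by (simp add: real_sqrt_mult)
  qed
  have "cmod (pr (\<lambda>m. c + (\<Sum>j\<in>UNIV. scaleC (m$j) (g j m))) K) \<le> norm c * n0 + (\<Sum>j\<in>UNIV. sqrt (Cj j) * sqrt (b j))"
  proof -
    have "cmod (pr (\<lambda>m. c + (\<Sum>j\<in>UNIV. scaleC (m$j) (g j m))) K) \<le> cmod (cinner c (lsum snd K)) + cmod (\<Sum>j\<in>UNIV. pr (g j) (mapj j K))"
      unfolding pr_row by (rule norm_triangle_ineq)
    also have "\<dots> \<le> norm c * n0 + (\<Sum>j\<in>UNIV. sqrt (Cj j) * sqrt (b j))"
    proof (rule add_mono)
      show "cmod (cinner c (lsum snd K)) \<le> norm c * n0" unfolding n0_def by (rule cauchy_schwarz)
      show "cmod (\<Sum>j\<in>UNIV. pr (g j) (mapj j K)) \<le> (\<Sum>j\<in>UNIV. sqrt (Cj j) * sqrt (b j))"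
        by (rule order.trans[OF norm_sum]) (rule sum_mono[OF Pj])
    qed
    finally show ?thesis .
  qed
  also have "\<dots> \<le> norm c * n0 + sqrt (\<Sum>j\<in>UNIV. Cj j) * sqrt (\<Sum>j\<in>UNIV. b j)"
    using sum_sqrt_cs[of Cj b UNIV] C0 b0 by simp
  finally have le: "cmod (pr (\<lambda>m. c + (\<Sum>j\<in>UNIV. scaleC (m$j) (g j m))) K) \<le> norm c * n0 + sqrt (\<Sum>j\<in>UNIV. Cj j) * sqrt (\<Sum>j\<in>UNIV. b j)" .
  have "(cmod (pr (\<lambda>m. c + (\<Sum>j\<in>UNIV. scaleC (m$j) (g j m))) K))^2 \<le> (norm c * n0 + sqrt (\<Sum>j\<in>UNIV. Cj j) * sqrt (\<Sum>j\<in>UNIV. b j))^2"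
    by (rule power_mono[OF le norm_ge_zero])
  also have "\<dots> \<le> ((norm c)^2 + (sqrt (\<Sum>j\<in>UNIV. Cj j))^2) * (n0^2 + (sqrt (\<Sum>j\<in>UNIV. b j))^2)"
    by (rule cs2)
  also have "\<dots> = ((norm c)^2 + (\<Sum>j\<in>UNIV. Cj j)) * Re (BB K K)"
  proof -
    have "Re (BB K K) = n0^2 + (\<Sum>j\<in>UNIV. b j)" unfolding BB_row[OF K] b_def n0_def by simp
    thus ?thesis using C0 b0 by (simp add: sum_nonneg)
  qed
  finally show "(cmod (pr (\<lambda>m. c + (\<Sum>j\<in>UNIV. scaleC (m$j) (g j m))) K))^2 \<le> ((norm c)^2 + (\<Sum>j\<in>UNIV. Cj j)) * Re (BB K K)" .
qed




lemma reflect_dir: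
  fixes KS :: "((complex^'d::finite) \<times> 'u::chilbert) list" and g :: "complex^'d \<Rightarrow> 'u"
  assumes KS: "inball KS" and pg: "pr g KS = 0"
    and R: "rk_bound (\<lambda>m. kf KS m + scaleC c (g m)) C"
  shows "rk_bound (\<lambda>m. kf KS m + scaleC (- c) (g m)) C"
  unfolding rk_bound_iff
proof (intro allI impI)
  fix K' :: "((complex^'d) \<times> 'u) list" assume K': "inball K'"
  define \<beta> where "\<beta> = BB K' KS"
  define P where "P = pr g K'"
  define rb where "rb = Re (BB KS KS)"
  have b: "BB KS KS = complex_of_real rb" unfolding rb_def by (rule BB_self_eq)
  have rb0: "0 \<le> rb" unfolding rb_def by (rule BB_nonneg[OF KS])
  have h1: "BB KS K' = cnj \<beta>" unfolding \<beta>_def by (rule BB_herm)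
  have prm: "pr (\<lambda>m. kf KS m + scaleC (- c) (g m)) K' = cnj \<beta> - c * P"
    unfolding h1[symmetric] P_def by (simp add: pr_add pr_scaleC pr_kf)
  have prp: "pr (\<lambda>m. kf KS m + scaleC c (g m)) K' = cnj \<beta> + c * P"
    unfolding h1[symmetric] P_def by (simp add: pr_add pr_scaleC pr_kf)
  have Rb: "(cmod (pr (\<lambda>m. kf KS m + scaleC c (g m)) L))^2 \<le> C * Re (BB L L)" if "inball L" for L
    using R that unfolding rk_bound_iff by blast
  show "(cmod (pr (\<lambda>m. kf KS m + scaleC (- c) (g m)) K'))^2 \<le> C * Re (BB K' K')"
  proof (cases "rb = 0")
    case True
    have "(cmod \<beta>)^2 \<le> Re (BB K' K') * Re (BB KS KS)" unfolding \<beta>_def by (rule BB_cs[OF K' KS])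
    hence "\<beta> = 0" using True rb_def by simp
    have "(cmod (pr (\<lambda>m. kf KS m + scaleC (- c) (g m)) K'))^2 = (cmod (pr (\<lambda>m. kf KS m + scaleC c (g m)) K'))^2"
      unfolding prm prp \<open>\<beta> = 0\<close> by (simp add: norm_minus_cancel)
    thus ?thesis using Rb[OF K'] by simp
  next
    case False
    hence rbp: "0 < rb" using rb0 by simp
    define s where "s = 2 * \<beta> / complex_of_real rb"
    define L where "L = scl s KS @ scl (-1) K'"
    have L: "inball L" unfolding L_def using KS K' by simp
    have pKS: "pr (\<lambda>m. kf KS m + scaleC c (g m)) KS = complex_of_real rb"
      by (simp add: pr_add pr_scaleC pr_kf pg b)
    have "pr (\<lambda>m. kf KS m + scaleC c (g m)) L = cnj s * complex_of_real rb - (cnj \<beta> + c * P)"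
      unfolding L_def pr_append pr_scl pKS prp by simp
    also have "cnj s * complex_of_real rb = 2 * cnj \<beta>" unfolding s_def using rbp by simp
    finally have e1: "pr (\<lambda>m. kf KS m + scaleC c (g m)) L = pr (\<lambda>m. kf KS m + scaleC (- c) (g m)) K'"
      unfolding prm by simp
    have "BB L L = s * cnj s * complex_of_real rb - s * cnj \<beta> - cnj s * \<beta> + BB K' K'"
      unfolding L_def by (simp add: BB_append_left BB_append_right BB_scl_left BB_scl_right b h1 \<beta>_def algebra_simps)
    also have "s * cnj s * complex_of_real rb - s * cnj \<beta> - cnj s * \<beta> = 0"
      unfolding s_def using rbp by (simp add: field_simps)
    finally have e2: "BB L L = BB K' K'" by simp
    show ?thesis using Rb[OF L] unfolding e1 e2 .
  qed
qed

lemma reflect_normsq: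
  fixes KS :: "((complex^'d::finite) \<times> 'u::chilbert) list" and g :: "complex^'d \<Rightarrow> 'u"
  assumes KS: "inball KS" and pg: "pr g KS = 0"
  shows "rk_normsq (\<lambda>m. kf KS m + scaleC c (g m)) = rk_normsq (\<lambda>m. kf KS m + scaleC (- c) (g m))"
proof -
  have "rk_bound (\<lambda>m. kf KS m + scaleC c (g m)) C = rk_bound (\<lambda>m. kf KS m + scaleC (- c) (g m)) C" for C
    using reflect_dir[OF KS pg, of c C] reflect_dir[OF KS pg, of "- c" C] by auto
  thus ?thesis unfolding rk_normsq_def by simp
qed

lemma reflect_inner:
  fixes KS :: "((complex^'d::finite) \<times> 'u::chilbert) list" and g :: "complex^'d \<Rightarrow> 'u"
  assumes KS: "inball KS" and pg: "pr g KS = 0"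
  shows "rk_inner (kf KS) g = 0"
proof -
  have i2: "\<i>^2 = - (1::complex)" by simp
  have i3: "\<i>^3 = - \<i>" by (simp add: power3_eq_cube)
  have N0: "rk_normsq (\<lambda>m. kf KS m + scaleC (\<i>^2) (g m)) = rk_normsq (\<lambda>m. kf KS m + scaleC (\<i>^0) (g m))"
    unfolding i2 using reflect_normsq[OF KS pg, of 1] by simp
  have N1: "rk_normsq (\<lambda>m. kf KS m + scaleC (\<i>^3) (g m)) = rk_normsq (\<lambda>m. kf KS m + scaleC (\<i>^1) (g m))"
    unfolding i3 using reflect_normsq[OF KS pg, of \<i>] by simp
  show ?thesis unfolding rk_inner_def polar_sum4 N0 N1 by (simp add: i2 i3)
qed




locale rsetup3 = rsetup2 S A B C D
  for S :: "complex^'d \<Rightarrow> 'u::chilbert \<Rightarrow> 'y::chilbert"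
    and A :: "'d::finite \<Rightarrow> 'x::chilbert \<Rightarrow> 'x"
    and B :: "'d \<Rightarrow> 'u \<Rightarrow> 'x"
    and C :: "'x \<Rightarrow> 'y"
    and D :: "'u \<Rightarrow> 'y" +
  assumes inner: "inner_schur S"
    and obs: "observable A C"
begin

definition mapS :: "((complex^'d) \<times> 'y) list \<Rightarrow> ((complex^'d) \<times> 'u) list" where
  "mapS K = map (\<lambda>a. (fst a, adj (S (fst a)) (snd a))) K"

definition Ostar :: "((complex^'d) \<times> 'y) list \<Rightarrow> 'x" where
  "Ostar K = lsum (\<lambda>a. ee (fst a) (snd a)) K"

definition fx :: "'x \<Rightarrow> complex^'d \<Rightarrow> 'y" where
  "fx x = (\<lambda>m. F m x)"

lemma inball_mapS[simp]: "inball (mapS K) \<longleftrightarrow> inball K"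
  unfolding inball_def mapS_def by auto

lemma mapS_append: "mapS (K @ K') = mapS K @ mapS K'"
  unfolding mapS_def by simp

lemma mapS_scl: "inball K \<Longrightarrow> mapS (scl t K) = scl t (mapS K)"
  unfolding mapS_def scl_def inball_def by (auto simp: adj_scaleC[OF Sblin])

lemma Ostar_append: "Ostar (K @ K') = Ostar K + Ostar K'"
  unfolding Ostar_def by simp

lemma Ostar_scl: "inball K \<Longrightarrow> Ostar (scl t K) = scaleC t (Ostar K)"
  unfolding Ostar_def scl_def inball_def by (simp add: scaleC_lsum) (rule lsum_cong, simp add: ee_scaleC)

lemma Ostar_Nil[simp]: "Ostar [] = 0" unfolding Ostar_def by simp

lemma gramG: assumes K: "inball K" and K': "inball K'"
  shows "cinner (Ostar K) (Ostar K') = BB K K' - BB (mapS K) (mapS K')"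
proof -
  have "cinner (Ostar K) (Ostar K') = lsum (\<lambda>a. lsum (\<lambda>b. cinner (ee (fst a) (snd a)) (ee (fst b) (snd b))) K') K"
    unfolding Ostar_def by (simp add: cinner_lsum_left cinner_lsum_right) (rule lsum_swap)
  also have "\<dots> = lsum (\<lambda>a. lsum (\<lambda>b. kd (fst b) (fst a) * cinner (snd a) (snd b)
        - kd (fst b) (fst a) * cinner (adj (S (fst a)) (snd a)) (adj (S (fst b)) (snd b))) K') K"
  proof (intro lsum_cong)
    fix a b assume "a \<in> set K" "b \<in> set K'"
    hence ab: "fst a \<in> dball" "fst b \<in> dball" using K K' unfolding inball_def by auto
    show "cinner (ee (fst a) (snd a)) (ee (fst b) (snd b)) = kd (fst b) (fst a) * cinner (snd a) (snd b)
        - kd (fst b) (fst a) * cinner (adj (S (fst a)) (snd a)) (adj (S (fst b)) (snd b))"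
      using ee_gram[OF ab] by (simp add: S_adj ab right_diff_distrib)
  qed
  also have "\<dots> = BB K K' - BB (mapS K) (mapS K')"
    unfolding BB_def mapS_def by (simp add: lsum_diff)
  finally show ?thesis .
qed

lemma normO: assumes K: "inball K"
  shows "(norm (Ostar K))^2 = Re (BB K K) - Re (BB (mapS K) (mapS K))"
  using arg_cong[OF gramG[OF K K], of Re] by (simp add: cinner_self_re)

lemma BS_le_BB: assumes K: "inball K" shows "Re (BB (mapS K) (mapS K)) \<le> Re (BB K K)"
  using normO[OF K] zero_le_power2[of "norm (Ostar K)"] by linarith

lemma pr_fx: assumes K: "inball K" shows "pr (fx x) K = cinner x (Ostar K)"
proof -
  have "pr (fx x) K = lsum (\<lambda>a. cinner x (ee (fst a) (snd a))) K"
    unfolding pr_def fx_def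
    by (rule lsum_cong) (use K in \<open>auto simp: inball_def F_adj\<close>)
  thus ?thesis unfolding Ostar_def by (simp add: cinner_lsum_right)
qed

lemma fx_bound: "rk_bound (fx w) ((norm w)^2)"
  unfolding rk_bound_iff
proof (intro allI impI)
  fix K :: "((complex^'d) \<times> 'y) list" assume K: "inball K"
  have "cmod (pr (fx w) K) \<le> norm w * norm (Ostar K)" unfolding pr_fx[OF K] by (rule cauchy_schwarz)
  hence "(cmod (pr (fx w) K))^2 \<le> (norm w)^2 * (norm (Ostar K))^2"
    by (metis power_mono norm_ge_zero power_mult_distrib)
  also have "\<dots> \<le> (norm w)^2 * Re (BB K K)"
    using BS_le_BB[OF K] BB_nonneg[of "mapS K"] K normO[OF K] by (intro mult_left_mono) auto
  finally show "(cmod (pr (fx w) K))^2 \<le> (norm w)^2 * Re (BB K K)" .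
qed

lemma fx_mem: "rk_mem (fx w)" using fx_bound unfolding rk_mem_def by blast

lemma fx_normsq_le: "rk_normsq (fx w) \<le> (norm w)^2"
  by (rule rk_normsq_le[OF _ fx_bound]) simp

lemma schur: "schur_class S" using inner unfolding inner_schur_def by blast

lemma inner_eq: assumes K: "inball K"
  shows "rk_normsq (\<lambda>m. S m (kf (mapS K) m)) = Re (BB (mapS K) (mapS K))"
proof -
  have mem: "rk_mem (kf (mapS K))" using kf_normsq(2)[of "mapS K"] K by simp
  have orth: "rk_inner (kf (mapS K)) g = 0" if "rk_mem g" "\<forall>m\<in>dball. S m (g m) = 0" for g
  proof (rule reflect_inner)
    show "inball (mapS K)" using K by simp
    have "pr g (mapS K) = lsum (\<lambda>a. cinner (S (fst a) (g (fst a))) (snd a)) K"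
      unfolding pr_def mapS_def
      by (simp, rule lsum_cong) (use K in \<open>auto simp: inball_def adj_prop[OF Sblin]\<close>)
    also have "\<dots> = lsum (\<lambda>a. 0) K"
      by (rule lsum_cong) (use K that in \<open>auto simp: inball_def\<close>)
    finally show "pr g (mapS K) = 0" by simp
  qed
  have "rk_normsq (\<lambda>m. S m (kf (mapS K) m)) = rk_normsq (kf (mapS K))"
    using inner mem orth unfolding inner_schur_def by blast
  thus ?thesis using kf_normsq(1)[of "mapS K"] K by simp
qed

lemma pr_Sphi: assumes K: "inball K" and K'': "inball K''"
  shows "pr (\<lambda>m. S m (kf (mapS K) m)) K'' = BB (mapS K) (mapS K'')"
proof -
  have "pr (\<lambda>m. S m (kf (mapS K) m)) K'' = pr (kf (mapS K)) (mapS K'')"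
    unfolding pr_def mapS_def
    by (simp, rule lsum_cong) (use K'' in \<open>auto simp: inball_def adj_prop[OF Sblin]\<close>)
  thus ?thesis by (simp add: pr_kf)
qed

end




context rsetup3 begin

abbreviation BS where "BS K K' \<equiv> BB (mapS K) (mapS K')"

lemma J_exists:
  assumes K: "inball K" and e: "0 < \<epsilon>"
  shows "\<exists>J. inball J \<and> (norm (Ostar J))^2 \<le> \<epsilon> \<and> Re (BS (K @ scl (-1) J) (K @ scl (-1) J)) \<le> \<epsilon>"
proof -
  define q where "q = Re (BS K K)"
  show ?thesis
  proof (cases "q \<le> \<epsilon>")
    case True
    thus ?thesis using e by (intro exI[of _ "[]"]) (simp add: q_def scl_def)
  next
    case False
    hence qe: "\<epsilon> < q" by simp
    have "q - \<epsilon> < rk_normsq (\<lambda>m. S m (kf (mapS K) m))" using inner_eq[OF K] qe e q_def by simp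
    then obtain K'' where K'': "inball K''"
      and gt: "(q - \<epsilon>) * Re (BB K'' K'') < (cmod (pr (\<lambda>m. S m (kf (mapS K) m)) K''))^2"
      using rk_normsq_gt[of "q - \<epsilon>"] qe by auto
    define \<beta> where "\<beta> = BS K K''"
    define \<gamma> where "\<gamma> = Re (BB K'' K'')"
    have gt': "(q - \<epsilon>) * \<gamma> < (cmod \<beta>)^2" using gt unfolding \<beta>_def \<gamma>_def pr_Sphi[OF K K''] .
    have csb: "(cmod \<beta>)^2 \<le> q * Re (BS K'' K'')" unfolding \<beta>_def q_def by (rule BB_cs) (simp_all add: K K'')
    have q0: "0 \<le> q" unfolding q_def by (rule BB_nonneg) (simp add: K)
    have s0: "0 \<le> Re (BS K'' K'')" by (rule BB_nonneg) (simp add: K'')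
    have sg: "Re (BS K'' K'') \<le> \<gamma>" unfolding \<gamma>_def by (rule BS_le_BB[OF K''])
    have csb2: "(cmod \<beta>)^2 \<le> q * \<gamma>" using csb sg q0 by (meson mult_left_mono order_trans)
    have gpos: "0 < \<gamma>"
    proof (rule ccontr)
      assume "\<not> 0 < \<gamma>"
      hence "\<gamma> = 0" using BB_nonneg[OF K''] \<gamma>_def by simp
      thus False using gt' csb2 by simp
    qed
    define t where "t = \<beta> / complex_of_real \<gamma>"
    define J where "J = scl t K''"
    define a2 where "a2 = (cmod \<beta>)^2 / \<gamma>"
    have J: "inball J" unfolding J_def using K'' by simp
    have mJ: "mapS J = scl t (mapS K'')" unfolding J_def by (rule mapS_scl[OF K''])
    have BSKJ: "Re (BS K J) = a2"
    proof -
      have "BS K J = cnj t * \<beta>" unfolding mJ BB_scl_right \<beta>_def ..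
      also have "cnj t * \<beta> = complex_of_real a2"
        unfolding t_def a2_def using complex_norm_square[of \<beta>] gpos by (simp add: mult.commute del: of_real_power)
      finally show ?thesis by simp
    qed
    have BBJJ: "Re (BB J J) = a2"
    proof -
      have "BB J J = t * cnj t * BB K'' K''" unfolding J_def by (simp add: BB_scl_left BB_scl_right mult.assoc)
      hence "Re (BB J J) = (cmod t)^2 * \<gamma>" unfolding \<gamma>_def by (simp only: Re_mult_cnj_self)
      also have "\<dots> = a2" unfolding t_def a2_def using gpos
        by (simp add: norm_divide power_divide power2_eq_square)
      finally show ?thesis .
    qed
    have a2q: "a2 \<le> q" unfolding a2_def using csb2 gpos by (simp add: divide_le_eq mult.commute)
    have a2e: "q - \<epsilon> < a2" unfolding a2_def using gt' gpos by (simp add: less_divide_eq)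
    have quad: "Re (BS (K @ scl (-1) J) (K @ scl (-1) J)) = q - 2 * a2 + Re (BS J J)"
    proof -
      have "mapS (K @ scl (-1) J) = mapS K @ scl (-1) (mapS J)" by (simp add: mapS_append mapS_scl J)
      hence "Re (BS (K @ scl (-1) J) (K @ scl (-1) J)) = q + 2 * Re (cnj (-1) * BS K J) + (cmod (-1::complex))^2 * Re (BS J J)"
        unfolding q_def by (simp only: BB_quad)
      thus ?thesis using BSKJ by simp
    qed
    have nn: "0 \<le> Re (BS (K @ scl (-1) J) (K @ scl (-1) J))" by (rule BB_nonneg) (simp add: K J)
    have BSJJ: "Re (BS J J) \<le> a2" using BS_le_BB[OF J] BBJJ by simp
    have "(norm (Ostar J))^2 = a2 - Re (BS J J)" using normO[OF J] BBJJ by simp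
    also have "\<dots> \<le> \<epsilon>" using quad nn a2e by linarith
    finally have n1: "(norm (Ostar J))^2 \<le> \<epsilon>" .
    have n2: "Re (BS (K @ scl (-1) J) (K @ scl (-1) J)) \<le> \<epsilon>" using quad BSJJ a2e by linarith
    show ?thesis using J n1 n2 by blast
  qed
qed

lemma isometry: assumes K: "inball K"
  shows "(norm (Ostar K))^2 \<le> rk_normsq (fx (Ostar K))"
proof (rule ccontr)
  define x where "x = Ostar K"
  define b where "b = (norm x)^2"
  define N where "N = rk_normsq (fx x)"
  assume "\<not> ?thesis"
  hence Nb: "N < b" unfolding N_def b_def x_def by simp
  have N0: "0 \<le> N" unfolding N_def by (rule rk_normsq_prop(2)[OF fx_mem])
  have b0: "0 < b" using Nb N0 by simp
  define \<delta> where "\<delta> = (b - N) / (2*b + 4*N + 1)"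
  have dpos: "0 < \<delta>" unfolding \<delta>_def using Nb N0 by simp
  have dlt: "\<delta> * (2*b + 4*N) < b - N"
  proof -
    have "\<delta> * (2*b + 4*N) = (b - N) * ((2*b + 4*N) / (2*b + 4*N + 1))" unfolding \<delta>_def by simp
    also have "\<dots> < (b - N) * 1" using Nb N0 b0 by (intro mult_strict_left_mono) auto
    finally show ?thesis by simp
  qed
  have d1: "\<delta> \<le> 1"
  proof -
    have "b - N \<le> 2*b + 4*N + 1" using N0 b0 by simp
    thus ?thesis unfolding \<delta>_def using N0 b0 by (simp add: divide_le_eq)
  qed
  obtain J where J: "inball J" and n1: "(norm (Ostar J))^2 \<le> \<delta>^2 * b"
    and n2: "Re (BS (K @ scl (-1) J) (K @ scl (-1) J)) \<le> \<delta>^2 * b"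
    using J_exists[OF K, of "\<delta>^2 * b"] dpos b0 by auto
  define K' where "K' = K @ scl (-1) J"
  have K': "inball K'" unfolding K'_def using K J by simp
  have OK': "Ostar K' = x - Ostar J" unfolding K'_def x_def
    by (simp add: Ostar_append Ostar_scl J scaleC_minus1)
  have nJ: "norm (Ostar J) \<le> \<delta> * norm x"
  proof -
    have "(norm (Ostar J))^2 \<le> (\<delta> * norm x)^2" using n1 unfolding b_def by (simp add: power_mult_distrib)
    thus ?thesis using dpos by (meson mult_nonneg_nonneg norm_ge_zero power2_le_imp_le less_imp_le)
  qed
  have prK': "pr (fx x) K' = complex_of_real b - cinner x (Ostar J)"
    unfolding pr_fx[OF K'] OK' b_def by (simp add: cinner_diff_right cinner_self_norm)
  have cj: "cmod (cinner x (Ostar J)) \<le> \<delta> * b"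
  proof -
    have "cmod (cinner x (Ostar J)) \<le> norm x * norm (Ostar J)" by (rule cauchy_schwarz)
    also have "\<dots> \<le> norm x * (\<delta> * norm x)" by (rule mult_left_mono[OF nJ norm_ge_zero])
    finally show ?thesis unfolding b_def by (simp add: power2_eq_square mult_ac)
  qed
  have lowp: "b * (1 - \<delta>) \<le> cmod (pr (fx x) K')"
  proof -
    have "cmod (complex_of_real b) - cmod (cinner x (Ostar J)) \<le> cmod (pr (fx x) K')"
      unfolding prK' by (rule norm_triangle_ineq2)
    thus ?thesis using cj b0 by (simp add: algebra_simps)
  qed
  have nK': "(norm (Ostar K'))^2 \<le> (1 + \<delta>)^2 * b"
  proof -
    have "norm (Ostar K') \<le> norm x + \<delta> * norm x" unfolding OK' using nJ norm_triangle_ineq4[of x "Ostar J"] by linarith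
    hence "(norm (Ostar K'))^2 \<le> ((1 + \<delta>) * norm x)^2" by (intro power_mono) (auto simp: algebra_simps)
    thus ?thesis unfolding b_def by (simp add: power_mult_distrib)
  qed
  have BBK': "Re (BB K' K') \<le> b * ((1 + \<delta>)^2 + \<delta>^2)"
    using normO[OF K'] nK' n2 unfolding K'_def by (simp add: algebra_simps)
  have "(b * (1 - \<delta>))^2 \<le> (cmod (pr (fx x) K'))^2"
    using lowp dpos d1 b0 by (intro power_mono) auto
  also have "\<dots> \<le> N * Re (BB K' K')" unfolding N_def by (rule rk_bound_pr[OF fx_mem K'])
  also have "\<dots> \<le> N * (b * ((1 + \<delta>)^2 + \<delta>^2))" by (rule mult_left_mono[OF BBK' N0])
  finally have ineq: "(b * (1 - \<delta>))^2 \<le> N * (b * ((1 + \<delta>)^2 + \<delta>^2))" .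
  hence "b * (b * (1 - \<delta>)^2) \<le> b * (N * ((1 + \<delta>)^2 + \<delta>^2))" by (simp add: power_mult_distrib power2_eq_square mult_ac)
  hence ineq2: "b * (1 - \<delta>)^2 \<le> N * ((1 + \<delta>)^2 + \<delta>^2)" using b0 by simp
  have "b * (1 - 2*\<delta>) \<le> b * (1 - \<delta>)^2" using b0 by (intro mult_left_mono) (auto simp: power2_eq_square algebra_simps)
  moreover have "N * ((1 + \<delta>)^2 + \<delta>^2) \<le> N * (1 + 4*\<delta>)"
  proof (rule mult_left_mono[OF _ N0])
    have "\<delta>^2 \<le> \<delta>" using dpos d1 by (simp add: power2_eq_square mult_le_cancel_left1)
    thus "(1 + \<delta>)^2 + \<delta>^2 \<le> 1 + 4*\<delta>" by (simp add: power2_eq_square algebra_simps)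
  qed
  ultimately have "b * (1 - 2*\<delta>) \<le> N * (1 + 4*\<delta>)" using ineq2 by linarith
  hence "b - N \<le> \<delta> * (2*b + 4*N)" by (simp add: algebra_simps)
  thus False using dlt by simp
qed

end




lemma half_parallelogram:
  fixes a b :: "'a::chilbert"
  shows "(norm (scaleC (1/2) (a + b)))^2 + (norm (scaleC (1/2) (a - b)))^2 = ((norm a)^2 + (norm b)^2) / 2"
proof -
  have "(norm (scaleC (1/2) (a + b)))^2 = (norm (a + b))^2 / 4" by (simp add: norm_scaleC power_mult_distrib power2_eq_square)
  moreover have "(norm (scaleC (1/2) (a - b)))^2 = (norm (a - b))^2 / 4" by (simp add: norm_scaleC power_mult_distrib power2_eq_square)
  ultimately show ?thesis by (simp add: norm_add_sq norm_diff_sq)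
qed

context rsetup3 begin

lemma comm_V: assumes K: "inball K"
  shows "A i (A j (Ostar K)) = A j (A i (Ostar K))"
proof -
  define x where "x = Ostar K"
  define w where "w = (\<lambda>j k. scaleC (1/2) (A k (A j x) + A j (A k x)))"
  define d where "d = (\<lambda>j k. scaleC (1/2) (A k (A j x) - A j (A k x)))"
  define gt where "gt = (\<lambda>j m. C (A j x) + (\<Sum>k\<in>UNIV. scaleC (m$k) (fx (w j k) m)))"
  have bgt: "rk_bound (gt j) ((norm (C (A j x)))^2 + (\<Sum>k\<in>UNIV. (norm (w j k))^2))" for j
    unfolding gt_def by (rule row_bound[OF fx_bound]) simp
  have bf: "rk_bound (\<lambda>m. C x + (\<Sum>j\<in>UNIV. scaleC (m$j) (gt j m)))
     ((norm (C x))^2 + (\<Sum>j\<in>UNIV. (norm (C (A j x)))^2 + (\<Sum>k\<in>UNIV. (norm (w j k))^2)))"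
    by (rule row_bound[OF bgt]) (simp add: sum_nonneg)
  have agree: "fx x m = C x + (\<Sum>j\<in>UNIV. scaleC (m$j) (gt j m))" if m: "m \<in> dball" for m
  proof -
    define a where "a = (\<lambda>j k. F m (A k (A j x)))"
    have Fw: "fx (w j k) m = scaleC (1/2) (a j k + a k j)" for j k
      unfolding fx_def w_def a_def by (simp add: F_scaleC[OF m] F_add[OF m])
    have "(\<Sum>j\<in>UNIV. scaleC (m$j) (\<Sum>k\<in>UNIV. scaleC (m$k) (fx (w j k) m)))
        = (\<Sum>j\<in>UNIV. \<Sum>k\<in>UNIV. scaleC (m$j * m$k) (scaleC (1/2) (a j k + a k j)))"
      by (simp add: Fw scaleC_sum_right scaleC_scaleC)
    also have "\<dots> = scaleC (1/2) (\<Sum>j\<in>UNIV. \<Sum>k\<in>UNIV. scaleC (m$j * m$k) (a j k))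
        + scaleC (1/2) (\<Sum>j\<in>UNIV. \<Sum>k\<in>UNIV. scaleC (m$j * m$k) (a k j))"
      by (simp add: scaleC_add_right scaleC_sum_right scaleC_scaleC sum.distrib mult.commute)
    also have "(\<Sum>j\<in>UNIV. \<Sum>k\<in>UNIV. scaleC (m$j * m$k) (a k j)) = (\<Sum>j\<in>UNIV. \<Sum>k\<in>UNIV. scaleC (m$j * m$k) (a j k))"
      by (subst sum.swap) (simp add: mult.commute)
    also have "scaleC (1/2) (\<Sum>j\<in>UNIV. \<Sum>k\<in>UNIV. scaleC (m$j * m$k) (a j k)) + scaleC (1/2) (\<Sum>j\<in>UNIV. \<Sum>k\<in>UNIV. scaleC (m$j * m$k) (a j k))
        = (\<Sum>j\<in>UNIV. \<Sum>k\<in>UNIV. scaleC (m$j * m$k) (a j k))"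
      by (simp add: scaleC_add_left[symmetric] scaleC_one)
    also have "\<dots> = (\<Sum>j\<in>UNIV. scaleC (m$j) (\<Sum>k\<in>UNIV. scaleC (m$k) (a j k)))"
      by (simp add: scaleC_sum_right scaleC_scaleC)
    finally have E: "(\<Sum>j\<in>UNIV. scaleC (m$j) (\<Sum>k\<in>UNIV. scaleC (m$k) (fx (w j k) m)))
        = (\<Sum>j\<in>UNIV. scaleC (m$j) (\<Sum>k\<in>UNIV. scaleC (m$k) (a j k)))" .
    have "fx x m = C x + (\<Sum>j\<in>UNIV. scaleC (m$j) (C (A j x) + (\<Sum>k\<in>UNIV. scaleC (m$k) (a j k))))"
      unfolding fx_def a_def by (subst F_gleason[OF m]) (subst F_gleason[OF m], simp)
    also have "\<dots> = C x + (\<Sum>j\<in>UNIV. scaleC (m$j) (C (A j x))) + (\<Sum>j\<in>UNIV. scaleC (m$j) (\<Sum>k\<in>UNIV. scaleC (m$k) (a j k)))"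
      by (simp add: scaleC_add_right sum.distrib add.assoc)
    also have "\<dots> = C x + (\<Sum>j\<in>UNIV. scaleC (m$j) (gt j m))"
      unfolding E[symmetric] gt_def by (simp add: scaleC_add_right sum.distrib add.assoc)
    finally show ?thesis .
  qed
  have "rk_bound (fx x) ((norm (C x))^2 + (\<Sum>j\<in>UNIV. (norm (C (A j x)))^2 + (\<Sum>k\<in>UNIV. (norm (w j k))^2)))"
    using bf rk_bound_cong[of "fx x" "\<lambda>m. C x + (\<Sum>j\<in>UNIV. scaleC (m$j) (gt j m))"] agree by blast
  hence "rk_normsq (fx x) \<le> (norm (C x))^2 + (\<Sum>j\<in>UNIV. (norm (C (A j x)))^2 + (\<Sum>k\<in>UNIV. (norm (w j k))^2))"
    by (intro rk_normsq_le) (auto intro!: add_nonneg_nonneg sum_nonneg)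
  with isometry[OF K] have I1: "(norm x)^2 \<le> (norm (C x))^2 + (\<Sum>j\<in>UNIV. (norm (C (A j x)))^2) + (\<Sum>j\<in>UNIV. \<Sum>k\<in>UNIV. (norm (w j k))^2)"
    unfolding x_def by (simp add: sum.distrib add.assoc)
  have c1: "(\<Sum>j\<in>UNIV. (norm (A j x))^2) + (norm (C x))^2 \<le> (norm x)^2" by (rule contr_x)
  have c2: "(\<Sum>k\<in>UNIV. (norm (A k (A j x)))^2) + (norm (C (A j x)))^2 \<le> (norm (A j x))^2" for j by (rule contr_x)
  have c3: "(\<Sum>j\<in>UNIV. \<Sum>k\<in>UNIV. (norm (A k (A j x)))^2) + (\<Sum>j\<in>UNIV. (norm (C (A j x)))^2) \<le> (\<Sum>j\<in>UNIV. (norm (A j x))^2)"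
    using sum_mono[of UNIV "\<lambda>j. (\<Sum>k\<in>UNIV. (norm (A k (A j x)))^2) + (norm (C (A j x)))^2" "\<lambda>j. (norm (A j x))^2", OF c2]
    by (simp add: sum.distrib)
  have par: "(norm (w j k))^2 + (norm (d j k))^2 = ((norm (A k (A j x)))^2 + (norm (A j (A k x)))^2) / 2" for j k
    unfolding w_def d_def by (rule half_parallelogram)
  have sw: "(\<Sum>j\<in>UNIV. \<Sum>k\<in>UNIV. (norm (A j (A k x)))^2) = (\<Sum>j\<in>UNIV. \<Sum>k\<in>UNIV. (norm (A k (A j x)))^2)"
    by (rule sum.swap)
  have "(\<Sum>j\<in>UNIV. \<Sum>k\<in>UNIV. (norm (w j k))^2) + (\<Sum>j\<in>UNIV. \<Sum>k\<in>UNIV. (norm (d j k))^2)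
      = (\<Sum>j\<in>UNIV. \<Sum>k\<in>UNIV. ((norm (A k (A j x)))^2 + (norm (A j (A k x)))^2) / 2)"
    by (simp add: par sum.distrib[symmetric])
  also have "\<dots> = ((\<Sum>j\<in>UNIV. \<Sum>k\<in>UNIV. (norm (A k (A j x)))^2) + (\<Sum>j\<in>UNIV. \<Sum>k\<in>UNIV. (norm (A j (A k x)))^2)) / 2"
    by (simp only: add_divide_distrib sum.distrib sum_divide_distrib)
  also have "\<dots> = (\<Sum>j\<in>UNIV. \<Sum>k\<in>UNIV. (norm (A k (A j x)))^2)" unfolding sw by simp
  finally have P: "(\<Sum>j\<in>UNIV. \<Sum>k\<in>UNIV. (norm (w j k))^2) + (\<Sum>j\<in>UNIV. \<Sum>k\<in>UNIV. (norm (d j k))^2)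
      = (\<Sum>j\<in>UNIV. \<Sum>k\<in>UNIV. (norm (A k (A j x)))^2)" .
  have "(\<Sum>j\<in>UNIV. \<Sum>k\<in>UNIV. (norm (d j k))^2) \<le> 0" using I1 c1 c3 P by linarith
  moreover have "0 \<le> (\<Sum>j\<in>UNIV. \<Sum>k\<in>UNIV. (norm (d j k))^2)" by (simp add: sum_nonneg)
  ultimately have "(\<Sum>j\<in>UNIV. \<Sum>k\<in>UNIV. (norm (d j k))^2) = 0" by simp
  hence "(\<Sum>k\<in>UNIV. (norm (d j k))^2) = 0" for j
    by (subst (asm) sum_nonneg_eq_0_iff) (auto intro: sum_nonneg)
  hence "(norm (d j i))^2 = 0" by (subst (asm) sum_nonneg_eq_0_iff) auto
  hence "scaleC (1/2) (A i (A j x) - A j (A i x)) = 0" unfolding d_def by simp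
  hence "scaleC 2 (scaleC (1/2) (A i (A j x) - A j (A i x))) = 0" by simp
  hence "A i (A j x) - A j (A i x) = 0" by (simp add: scaleC_scaleC scaleC_one)
  thus ?thesis unfolding x_def by simp
qed

lemma obs_zero: assumes "\<And>(l::complex^'d) y. l \<in> dball \<Longrightarrow> cinner (F l v) y = 0" shows "v = 0"
proof -
  have "\<forall>l\<in>dball. C (resolv A l v) = 0"
  proof
    fix l :: "complex^'d" assume l: "l \<in> dball"
    have "cinner (F l v) (F l v) = 0" by (rule assms[OF l])
    thus "C (resolv A l v) = 0" unfolding F_def by (simp add: cinner_eq_zero_iff)
  qed
  thus ?thesis using obs unfolding observable_def by blast
qed

lemma comm_all: "A i (A j x) = A j (A i x)"
proof -
  define c where "c = A i (A j x) - A j (A i x)"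
  have "c = 0"
  proof (rule obs_zero)
    fix l :: "complex^'d" and y assume l: "l \<in> dball"
    define e where "e = ee l y"
    define v where "v = adj (A j) (adj (A i) e) - adj (A i) (adj (A j) e)"
    have cv: "cinner c e = cinner x v" unfolding c_def v_def
      by (simp add: cinner_diff_left cinner_diff_right adj_prop[OF blinA] blin_linear)
    have "v = 0"
    proof (rule obs_zero)
      fix l' :: "complex^'d" and y' assume l': "l' \<in> dball"
      define e' where "e' = ee l' y'"
      have K: "inball [(l', y')]" using l' unfolding inball_def by simp
      have Oe: "Ostar [(l', y')] = e'" unfolding Ostar_def e'_def by simp
      have "cinner e' v = cinner (A i (A j e')) e - cinner (A j (A i e')) e"
        unfolding v_def by (simp add: cinner_diff_right adj_prop[OF blinA])
      also have "\<dots> = 0" using comm_V[OF K, of i j] unfolding Oe by simp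
      finally have "cinner e' v = 0" .
      hence "cinner v e' = 0" using cinner_commute[of e' v] by simp
      thus "cinner (F l' v) y' = 0" unfolding e'_def by (simp add: F_adj[OF l'])
    qed
    thus "cinner (F l c) y = 0" using cv unfolding e_def by (simp add: F_adj[OF l])
  qed
  thus ?thesis unfolding c_def by simp
qed

end


theorem theorem4p5:
  fixes S :: "complex^'d \<Rightarrow> 'u::chilbert \<Rightarrow> 'y::chilbert"
    and A :: "'d::finite \<Rightarrow> 'x::chilbert \<Rightarrow> 'x"
    and B :: "'d \<Rightarrow> 'u \<Rightarrow> 'x"
    and C :: "'x \<Rightarrow> 'y"
    and D :: "'u \<Rightarrow> 'y"
  assumes "inner_schur S"
    and "realization S A B C D"
    and "observable A C"
    and "weakly_coisometric A B C D"
  shows "commutative A"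
proof -
  have Sb: "\<And>l. l \<in> dball \<Longrightarrow> blin (S l)" using assms(1) unfolding inner_schur_def schur_class_def by blast
  have ct: "colig_contractive A B C D" using assms(4) unfolding weakly_coisometric_def by blast
  interpret rsetup3 S A B C D
  proof unfold_locales
    show "realization S A B C D" by (rule assms(2))
    show "colig_contractive A B C D" by (rule ct)
    show "\<And>l. l \<in> dball \<Longrightarrow> blin (S l)" by (rule Sb)
    show "weakly_coisometric A B C D" by (rule assms(4))
    show "inner_schur S" by (rule assms(1))
    show "observable A C" by (rule assms(3))
  qed
  show ?thesis unfolding commutative_def by (auto simp: fun_eq_iff comm_all)
qed

end
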